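(* Let $m\geq 1$. Let $\mathcal{I}\subseteq\mathcal{H}(C_m(\mathcal{P}))$ be the subspace spanned by the classes $[M_\circ]$ of $m$-cyclic complexes $M_\circ=(M_i,d_i)_{i\in\mathbb{Z}_m}\in C_m(\mathcal{P})$ with $d_0\neq 0$. Then $\mathcal{I}$ is a two-sided ideal of the algebra $\mathcal{H}(C_m(\mathcal{P}))$.
   Context: Let $k=\mathbb{F}_q$ be a finite field and $\mathcal{A}$ an essentially small finitary abelian $k$-category (all Hom and $\mathrm{Ext}^1$ spaces finite) with enough projectives; $\mathcal{P}\subset\mathcal{A}$ is the full subcategory of projective objects. For $m\geq1$, $\mathbb{Z}_m=\mathbb{Z}/m\mathbb{Z}=\{0,1,\dots,m-1\}$. An $m$-cyclic complex $M_\circ=(M_i,d_i)_{i\in\mathbb{Z}_m}$ over $\mathcal{A}$ consists of objects $M_i$ and morphisms $d_i:M_i\to M_{i+1}$ with $d_{i+1}d_i=0$ for all $i\in\mathbb{Z}_m$; morphisms are families $f_i:M_i\to N_i$ commuting with the differentials. This gives an abelian category $C_m(\mathcal{A})$, and $C_m(\mathcal{P})$ is the full subcategory of $m$-cyclic complexes with all $M_i\in\mathcal{P}$; it is closed under extensions (componentwise exact sequences). For a finitary abelian category $\mathcal{B}$, the Hall algebra $\mathcal{H}(\mathcal{B})$ is the $\mathbb{C}$-vector space with basis the isomorphism classes $[M]$ of objects of $\mathcal{B}$ and multiplication $[M]\diamond[N]=\sum_{[L]}\frac{|\mathrm{Ext}^1_{\mathcal{B}}(M,N)_L|}{|\mathrm{Hom}_{\mathcal{B}}(M,N)|}[L]$,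 where $\mathrm{Ext}^1_{\mathcal{B}}(M,N)_L$ is the set of classes of extensions $0\to N\to L\to M\to0$ with middle term isomorphic to $L$. $\mathcal{H}(C_m(\mathcal{P}))$ denotes the subalgebra of $\mathcal{H}(C_m(\mathcal{A}))$ spanned by classes of objects of $C_m(\mathcal{P})$. *)

theory Defs
  imports Complex_Main
begin

text \<open>A (small) category whose Hom sets carry a k-vector space structure.
  cmp g f is the composite of f followed by g.\<close>

record ('o, 'a, 'k) kcat =
  Ob   :: "'o set"
  Hom  :: "'o \<Rightarrow> 'o \<Rightarrow> 'a set"
  cmp  :: "'a \<Rightarrow> 'a \<Rightarrow> 'a"
  idt  :: "'o \<Rightarrow> 'a"
  zer  :: "'o \<Rightarrow> 'o \<Rightarrow> 'a"
  add  :: "'a \<Rightarrow> 'a \<Rightarrow> 'a"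
  neg  :: "'a \<Rightarrow> 'a"
  smul :: "'k \<Rightarrow> 'a \<Rightarrow> 'a"

definition is_category :: "('o, 'a, 'k) kcat \<Rightarrow> bool" where
  "is_category C \<longleftrightarrow>
     (\<forall>X\<in>Ob C. idt C X \<in> Hom C X X) \<and>
     (\<forall>X\<in>Ob C. \<forall>Y\<in>Ob C. \<forall>Z\<in>Ob C. \<forall>f\<in>Hom C X Y. \<forall>g\<in>Hom C Y Z.
        cmp C g f \<in> Hom C X Z) \<and>
     (\<forall>W\<in>Ob C. \<forall>X\<in>Ob C. \<forall>Y\<in>Ob C. \<forall>Z\<in>Ob C.
        \<forall>f\<in>Hom C W X. \<forall>g\<in>Hom C X Y. \<forall>h\<in>Hom C Y Z.
        cmp C h (cmp C g f) = cmp C (cmp C h g) f) \<and>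
     (\<forall>X\<in>Ob C. \<forall>Y\<in>Ob C. \<forall>f\<in>Hom C X Y.
        cmp C f (idt C X) = f \<and> cmp C (idt C Y) f = f)"

definition is_klinear :: "('o, 'a, 'k::field) kcat \<Rightarrow> bool" where
  "is_klinear C \<longleftrightarrow>
     (\<forall>X\<in>Ob C. \<forall>Y\<in>Ob C.
        zer C X Y \<in> Hom C X Y \<and>
        (\<forall>f\<in>Hom C X Y. \<forall>g\<in>Hom C X Y. add C f g \<in> Hom C X Y) \<and>
        (\<forall>f\<in>Hom C X Y. neg C f \<in> Hom C X Y) \<and>
        (\<forall>a. \<forall>f\<in>Hom C X Y. smul C a f \<in> Hom C X Y) \<and>
        (\<forall>f\<in>Hom C X Y. \<forall>g\<in>Hom C X Y. \<forall>h\<in>Hom C X Y.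
            add C (add C f g) h = add C f (add C g h)) \<and>
        (\<forall>f\<in>Hom C X Y. \<forall>g\<in>Hom C X Y. add C f g = add C g f) \<and>
        (\<forall>f\<in>Hom C X Y. add C f (zer C X Y) = f) \<and>
        (\<forall>f\<in>Hom C X Y. add C f (neg C f) = zer C X Y) \<and>
        (\<forall>a b. \<forall>f\<in>Hom C X Y. smul C (a + b) f = add C (smul C a f) (smul C b f)) \<and>
        (\<forall>a. \<forall>f\<in>Hom C X Y. \<forall>g\<in>Hom C X Y.
            smul C a (add C f g) = add C (smul C a f) (smul C a g)) \<and>
        (\<forall>a b. \<forall>f\<in>Hom C X Y. smul C (a * b) f = smul C a (smul C b f)) \<and>
        (\<forall>f\<in>Hom C X Y. smul C 1 f = f)) \<and>
     (\<forall>X\<in>Ob C. \<forall>Y\<in>Ob C. \<forall>Z\<in>Ob C.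
        \<forall>f\<in>Hom C X Y. \<forall>f'\<in>Hom C X Y. \<forall>g\<in>Hom C Y Z. \<forall>g'\<in>Hom C Y Z. \<forall>a.
          cmp C (add C g g') f = add C (cmp C g f) (cmp C g' f) \<and>
          cmp C g (add C f f') = add C (cmp C g f) (cmp C g f') \<and>
          cmp C (smul C a g) f = smul C a (cmp C g f) \<and>
          cmp C g (smul C a f) = smul C a (cmp C g f))"

definition is_mono :: "('o, 'a, 'k) kcat \<Rightarrow> 'o \<Rightarrow> 'o \<Rightarrow> 'a \<Rightarrow> bool" where
  "is_mono C X Y f \<longleftrightarrow> f \<in> Hom C X Y \<and>
     (\<forall>Z\<in>Ob C. \<forall>g\<in>Hom C Z X. \<forall>h\<in>Hom C Z X. cmp C f g = cmp C f h \<longrightarrow> g = h)"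

definition is_epi :: "('o, 'a, 'k) kcat \<Rightarrow> 'o \<Rightarrow> 'o \<Rightarrow> 'a \<Rightarrow> bool" where
  "is_epi C X Y f \<longleftrightarrow> f \<in> Hom C X Y \<and>
     (\<forall>Z\<in>Ob C. \<forall>g\<in>Hom C Y Z. \<forall>h\<in>Hom C Y Z. cmp C g f = cmp C h f \<longrightarrow> g = h)"

definition isomorphic :: "('o, 'a, 'k) kcat \<Rightarrow> 'o \<Rightarrow> 'o \<Rightarrow> bool" where
  "isomorphic C X Y \<longleftrightarrow> X \<in> Ob C \<and> Y \<in> Ob C \<and>
     (\<exists>f\<in>Hom C X Y. \<exists>g\<in>Hom C Y X. cmp C g f = idt C X \<and> cmp C f g = idt C Y)"

definition is_zero_object :: "('o, 'a, 'k) kcat \<Rightarrow> 'o \<Rightarrow> bool" where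
  "is_zero_object C Z \<longleftrightarrow> Z \<in> Ob C \<and>
     (\<forall>X\<in>Ob C. (\<exists>!f. f \<in> Hom C Z X) \<and> (\<exists>!f. f \<in> Hom C X Z))"

definition is_kernel :: "('o, 'a, 'k) kcat \<Rightarrow> 'o \<Rightarrow> 'o \<Rightarrow> 'a \<Rightarrow> 'o \<Rightarrow> 'a \<Rightarrow> bool" where
  "is_kernel C X Y f K k \<longleftrightarrow> K \<in> Ob C \<and> k \<in> Hom C K X \<and> cmp C f k = zer C K Y \<and>
     (\<forall>W\<in>Ob C. \<forall>g\<in>Hom C W X. cmp C f g = zer C W Y \<longrightarrow>
        (\<exists>!u. u \<in> Hom C W K \<and> cmp C k u = g))"

definition is_cokernel :: "('o, 'a, 'k) kcat \<Rightarrow> 'o \<Rightarrow> 'o \<Rightarrow> 'a \<Rightarrow> 'o \<Rightarrow> 'a \<Rightarrow> bool" where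
  "is_cokernel C X Y f Q c \<longleftrightarrow> Q \<in> Ob C \<and> c \<in> Hom C Y Q \<and> cmp C c f = zer C X Q \<and>
     (\<forall>W\<in>Ob C. \<forall>g\<in>Hom C Y W. cmp C g f = zer C X W \<longrightarrow>
        (\<exists>!u. u \<in> Hom C Q W \<and> cmp C u c = g))"

definition is_biproduct :: "('o, 'a, 'k) kcat \<Rightarrow> 'o \<Rightarrow> 'o \<Rightarrow> 'o \<Rightarrow> bool" where
  "is_biproduct C X Y S \<longleftrightarrow> S \<in> Ob C \<and>
     (\<exists>i1\<in>Hom C X S. \<exists>i2\<in>Hom C Y S. \<exists>p1\<in>Hom C S X. \<exists>p2\<in>Hom C S Y.
        cmp C p1 i1 = idt C X \<and> cmp C p2 i2 = idt C Y \<and>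
        cmp C p1 i2 = zer C Y X \<and> cmp C p2 i1 = zer C X Y \<and>
        add C (cmp C i1 p1) (cmp C i2 p2) = idt C S)"

definition is_abelian :: "('o, 'a, 'k::field) kcat \<Rightarrow> bool" where
  "is_abelian C \<longleftrightarrow> is_category C \<and> is_klinear C \<and>
     (\<exists>Z. is_zero_object C Z) \<and>
     (\<forall>X\<in>Ob C. \<forall>Y\<in>Ob C. \<exists>S. is_biproduct C X Y S) \<and>
     (\<forall>X\<in>Ob C. \<forall>Y\<in>Ob C. \<forall>f\<in>Hom C X Y.
        (\<exists>K k. is_kernel C X Y f K k) \<and> (\<exists>Q c. is_cokernel C X Y f Q c)) \<and>
     (\<forall>X\<in>Ob C. \<forall>Y\<in>Ob C. \<forall>f.
        is_mono C X Y f \<longrightarrow> (\<exists>Z\<in>Ob C. \<exists>g\<in>Hom C Y Z. is_kernel C Y Z g X f)) \<and>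
     (\<forall>X\<in>Ob C. \<forall>Y\<in>Ob C. \<forall>f.
        is_epi C X Y f \<longrightarrow> (\<exists>Z\<in>Ob C. \<exists>g\<in>Hom C Z X. is_cokernel C Z X g Y f))"

definition is_ses :: "('o, 'a, 'k) kcat \<Rightarrow> 'o \<Rightarrow> 'o \<Rightarrow> 'o \<Rightarrow> 'a \<Rightarrow> 'a \<Rightarrow> bool" where
  "is_ses C N L M i p \<longleftrightarrow> N \<in> Ob C \<and> L \<in> Ob C \<and> M \<in> Ob C \<and>
     is_mono C N L i \<and> is_epi C L M p \<and> is_kernel C L M p N i"

definition exts :: "('o, 'a, 'k) kcat \<Rightarrow> 'o \<Rightarrow> 'o \<Rightarrow> ('o \<times> 'a \<times> 'a) set" where
  "exts C M N = {(L, i, p). is_ses C N L M i p}"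

definition ext_rel :: "('o, 'a, 'k) kcat \<Rightarrow> 'o \<Rightarrow> 'o \<Rightarrow> (('o \<times> 'a \<times> 'a) \<times> ('o \<times> 'a \<times> 'a)) set" where
  "ext_rel C M N = {((L, i, p), (L', i', p')).
      (L, i, p) \<in> exts C M N \<and> (L', i', p') \<in> exts C M N \<and>
      (\<exists>\<phi>\<in>Hom C L L'. cmp C \<phi> i = i' \<and> cmp C p' \<phi> = p)}"

definition Ext1 :: "('o, 'a, 'k) kcat \<Rightarrow> 'o \<Rightarrow> 'o \<Rightarrow> ('o \<times> 'a \<times> 'a) set set" where
  "Ext1 C M N = exts C M N // ext_rel C M N"

definition Ext1_mid :: "('o, 'a, 'k) kcat \<Rightarrow> 'o \<Rightarrow> 'o \<Rightarrow> 'o \<Rightarrow> ('o \<times> 'a \<times> 'a) set set" where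
  "Ext1_mid C M N L = {c \<in> Ext1 C M N. \<exists>(L', i, p)\<in>c. isomorphic C L' L}"

definition is_projective :: "('o, 'a, 'k) kcat \<Rightarrow> 'o \<Rightarrow> bool" where
  "is_projective C P \<longleftrightarrow> P \<in> Ob C \<and>
     (\<forall>X\<in>Ob C. \<forall>Y\<in>Ob C. \<forall>e f. is_epi C X Y e \<longrightarrow> f \<in> Hom C P Y \<longrightarrow>
        (\<exists>g\<in>Hom C P X. cmp C e g = f))"

definition enough_projectives :: "('o, 'a, 'k) kcat \<Rightarrow> bool" where
  "enough_projectives C \<longleftrightarrow>
     (\<forall>X\<in>Ob C. \<exists>P e. is_projective C P \<and> is_epi C P X e)"

definition finitary_abelian :: "('o, 'a, 'k::{finite,field}) kcat \<Rightarrow> bool" where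
  "finitary_abelian C \<longleftrightarrow> is_abelian C \<and>
     (\<forall>X\<in>Ob C. \<forall>Y\<in>Ob C. finite (Hom C X Y) \<and> finite (Ext1 C X Y))"

text \<open>An m-cyclic complex is a pair (M, d) of families indexed by i < m
  (values at i \<ge> m are fixed to undefined); indices are taken mod m.\<close>

definition cyc_cat :: "('o, 'a, 'k) kcat \<Rightarrow> nat \<Rightarrow>
    ((nat \<Rightarrow> 'o) \<times> (nat \<Rightarrow> 'a), nat \<Rightarrow> 'a, 'k) kcat" where
  "cyc_cat C m = \<lparr>
     Ob = {(M, d). (\<forall>i<m. M i \<in> Ob C \<and> d i \<in> Hom C (M i) (M (Suc i mod m)) \<and>
                       cmp C (d (Suc i mod m)) (d i) = zer C (M i) (M (Suc (Suc i mod m) mod m))) \<and>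
                   (\<forall>i\<ge>m. M i = undefined \<and> d i = undefined)},
     Hom = (\<lambda>(M, d) (N, e). {f. (\<forall>i<m. f i \<in> Hom C (M i) (N i) \<and>
                                       cmp C (e i) (f i) = cmp C (f (Suc i mod m)) (d i)) \<and>
                                 (\<forall>i\<ge>m. f i = undefined)}),
     cmp = (\<lambda>g f i. if i < m then cmp C (g i) (f i) else undefined),
     idt = (\<lambda>X i. if i < m then idt C (fst X i) else undefined),
     zer = (\<lambda>X Y i. if i < m then zer C (fst X i) (fst Y i) else undefined),
     add = (\<lambda>f g i. if i < m then add C (f i) (g i) else undefined),
     neg = (\<lambda>f i. if i < m then neg C (f i) else undefined),
     smul = (\<lambda>a f i. if i < m then smul C a (f i) else undefined) \<rparr>"

definition in_CmP :: "('o, 'a, 'k) kcat \<Rightarrow> nat \<Rightarrow> (nat \<Rightarrow> 'o) \<times> (nat \<Rightarrow> 'a) \<Rightarrow> bool" where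
  "in_CmP C m X \<longleftrightarrow> X \<in> Ob (cyc_cat C m) \<and> (\<forall>i<m. is_projective C (fst X i))"

definition d0_nonzero :: "('o, 'a, 'k) kcat \<Rightarrow> nat \<Rightarrow> (nat \<Rightarrow> 'o) \<times> (nat \<Rightarrow> 'a) \<Rightarrow> bool" where
  "d0_nonzero C m X \<longleftrightarrow> snd X 0 \<noteq> zer C (fst X 0) (fst X (1 mod m))"

definition isocls :: "('o, 'a, 'k) kcat \<Rightarrow> 'o \<Rightarrow> 'o set" where
  "isocls C X = {Y. isomorphic C X Y}"

definition iso_classes :: "('o, 'a, 'k) kcat \<Rightarrow> ('o \<Rightarrow> bool) \<Rightarrow> 'o set set" where
  "iso_classes C S = {isocls C X | X. X \<in> Ob C \<and> S X}"

definition rep :: "'o set \<Rightarrow> 'o" where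
  "rep c = (SOME X. X \<in> c)"

text \<open>Elements of the Hall algebra are finitely supported complex-valued functions on
  isomorphism classes; the class [M] is the indicator of isocls M.\<close>
definition hall_span :: "('o, 'a, 'k) kcat \<Rightarrow> ('o \<Rightarrow> bool) \<Rightarrow> ('o set \<Rightarrow> complex) set" where
  "hall_span C S = {f. finite {c. f c \<noteq> 0} \<and> {c. f c \<noteq> 0} \<subseteq> iso_classes C S}"

definition hall_coeff :: "('o, 'a, 'k) kcat \<Rightarrow> 'o \<Rightarrow> 'o \<Rightarrow> 'o \<Rightarrow> complex" where
  "hall_coeff C M N L = of_nat (card (Ext1_mid C M N L)) / of_nat (card (Hom C M N))"

definition hall_mult :: "('o, 'a, 'k) kcat \<Rightarrow> ('o set \<Rightarrow> complex) \<Rightarrow> ('o set \<Rightarrow> complex) \<Rightarrow> ('o set \<Rightarrow> complex)" where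
  "hall_mult C f g = (\<lambda>c. if c \<in> iso_classes C (\<lambda>_. True) then
      (\<Sum>a\<in>{a. f a \<noteq> 0}. \<Sum>b\<in>{b. g b \<noteq> 0}. f a * g b * hall_coeff C (rep a) (rep b) (rep c))
    else 0)"

definition two_sided_ideal :: "(('c \<Rightarrow> complex) \<Rightarrow> ('c \<Rightarrow> complex) \<Rightarrow> ('c \<Rightarrow> complex)) \<Rightarrow>
    ('c \<Rightarrow> complex) set \<Rightarrow> ('c \<Rightarrow> complex) set \<Rightarrow> bool" where
  "two_sided_ideal mult R J \<longleftrightarrow> J \<subseteq> R \<and> (\<lambda>_. 0) \<in> J \<and>
     (\<forall>f\<in>J. \<forall>g\<in>J. (\<lambda>c. f c + g c) \<in> J) \<and>
     (\<forall>a. \<forall>f\<in>J. (\<lambda>c. a * f c) \<in> J) \<and>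
     (\<forall>f\<in>R. \<forall>g\<in>J. mult f g \<in> J \<and> mult g f \<in> J)"

end

theory Submission
  imports Defs "HOL-Library.FuncSet"
begin

locale ab =
  fixes C :: "('o, 'a, 'k::field) kcat"
  assumes abel: "is_abelian C"
begin

abbreviation cp (infixl "\<cdot>" 70) where "g \<cdot> f \<equiv> cmp C g f"
abbreviation pl (infixl "+++" 65) where "f +++ g \<equiv> add C f g"

lemma cat: "is_category C" and lin: "is_klinear C"
  using abel unfolding is_abelian_def by auto

lemma comp_in: "X\<in>Ob C \<Longrightarrow> Y\<in>Ob C \<Longrightarrow> Z\<in>Ob C \<Longrightarrow> f\<in>Hom C X Y \<Longrightarrow> g\<in>Hom C Y Z \<Longrightarrow> g \<cdot> f \<in> Hom C X Z"
  using cat unfolding is_category_def by simp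
lemma assoc: "W\<in>Ob C \<Longrightarrow> X\<in>Ob C \<Longrightarrow> Y\<in>Ob C \<Longrightarrow> Z\<in>Ob C \<Longrightarrow> f\<in>Hom C W X \<Longrightarrow> g\<in>Hom C X Y \<Longrightarrow> h\<in>Hom C Y Z
  \<Longrightarrow> h \<cdot> (g \<cdot> f) = (h \<cdot> g) \<cdot> f"
  using cat unfolding is_category_def by simp
lemma id_in: "X\<in>Ob C \<Longrightarrow> idt C X \<in> Hom C X X"
  using cat unfolding is_category_def by simp
lemma id_r: "X\<in>Ob C \<Longrightarrow> Y\<in>Ob C \<Longrightarrow> f\<in>Hom C X Y \<Longrightarrow> f \<cdot> idt C X = f"
  using cat unfolding is_category_def by simp
lemma id_l: "X\<in>Ob C \<Longrightarrow> Y\<in>Ob C \<Longrightarrow> f\<in>Hom C X Y \<Longrightarrow> idt C Y \<cdot> f = f"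
  using cat unfolding is_category_def by simp

lemmas linXY = lin[unfolded is_klinear_def, THEN conjunct1, rule_format]
lemmas linXYZ = lin[unfolded is_klinear_def, THEN conjunct2, rule_format]

context fixes X Y assumes X: "X\<in>Ob C" and Y: "Y\<in>Ob C"
begin
lemma zer_in: "zer C X Y \<in> Hom C X Y" using linXY[OF X Y] by auto
lemma add_in: "f\<in>Hom C X Y \<Longrightarrow> g\<in>Hom C X Y \<Longrightarrow> f +++ g \<in> Hom C X Y" using linXY[OF X Y] by auto
lemma neg_in: "f\<in>Hom C X Y \<Longrightarrow> neg C f \<in> Hom C X Y" using linXY[OF X Y] by auto
lemma add_assoc: "f\<in>Hom C X Y \<Longrightarrow> g\<in>Hom C X Y \<Longrightarrow> h\<in>Hom C X Y \<Longrightarrow> (f +++ g) +++ h = f +++ (g +++ h)"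
  using linXY[OF X Y, THEN conjunct2, THEN conjunct2, THEN conjunct2, THEN conjunct2, THEN conjunct1] by blast
lemma add_comm: "f\<in>Hom C X Y \<Longrightarrow> g\<in>Hom C X Y \<Longrightarrow> f +++ g = g +++ f"
  using linXY[OF X Y, THEN conjunct2, THEN conjunct2, THEN conjunct2, THEN conjunct2, THEN conjunct2, THEN conjunct1] by blast
lemma add_zer: "f\<in>Hom C X Y \<Longrightarrow> f +++ zer C X Y = f"
  using linXY[OF X Y, THEN conjunct2, THEN conjunct2, THEN conjunct2, THEN conjunct2, THEN conjunct2, THEN conjunct2, THEN conjunct1] by blast
lemma add_neg: "f\<in>Hom C X Y \<Longrightarrow> f +++ neg C f = zer C X Y"
  using linXY[OF X Y, THEN conjunct2, THEN conjunct2, THEN conjunct2, THEN conjunct2, THEN conjunct2, THEN conjunct2, THEN conjunct2, THEN conjunct1] by blast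
lemma zer_add: "f\<in>Hom C X Y \<Longrightarrow> zer C X Y +++ f = f"
  using add_comm[OF zer_in] add_zer by simp
lemma neg_add: "f\<in>Hom C X Y \<Longrightarrow> neg C f +++ f = zer C X Y"
  using add_comm[OF neg_in] add_neg by simp
lemma add_cancel: assumes "f\<in>Hom C X Y" "g\<in>Hom C X Y" "h\<in>Hom C X Y" "f +++ g = f +++ h" shows "g = h"
proof -
  have "g = (neg C f +++ f) +++ g" using assms by (simp add: neg_add zer_add)
  also have "\<dots> = neg C f +++ (f +++ g)" using assms by (simp add: add_assoc neg_in)
  also have "\<dots> = (neg C f +++ f) +++ h" using assms by (simp add: add_assoc neg_in)
  also have "\<dots> = h" using assms by (simp add: neg_add zer_add)
  finally show ?thesis .
qed
lemma self_add: "f\<in>Hom C X Y \<Longrightarrow> f +++ f = f \<Longrightarrow> f = zer C X Y"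
  using add_cancel[of f f "zer C X Y"] add_zer zer_in by simp
lemma add_diff: "f\<in>Hom C X Y \<Longrightarrow> g\<in>Hom C X Y \<Longrightarrow> (f +++ neg C g) +++ g = f"
  by (simp add: add_assoc neg_add neg_in add_zer)
lemma neg_unique: "f\<in>Hom C X Y \<Longrightarrow> g\<in>Hom C X Y \<Longrightarrow> f +++ g = zer C X Y \<Longrightarrow> g = neg C f"
  using add_cancel[of f g "neg C f"] add_neg neg_in by simp
end

lemma comp_add_l: "X\<in>Ob C \<Longrightarrow> Y\<in>Ob C \<Longrightarrow> Z\<in>Ob C \<Longrightarrow> f\<in>Hom C X Y \<Longrightarrow> g\<in>Hom C Y Z \<Longrightarrow> g'\<in>Hom C Y Z
  \<Longrightarrow> (g +++ g') \<cdot> f = (g \<cdot> f) +++ (g' \<cdot> f)"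
  by (simp add: linXYZ)
lemma comp_add_r: "X\<in>Ob C \<Longrightarrow> Y\<in>Ob C \<Longrightarrow> Z\<in>Ob C \<Longrightarrow> f\<in>Hom C X Y \<Longrightarrow> f'\<in>Hom C X Y \<Longrightarrow> g\<in>Hom C Y Z
  \<Longrightarrow> g \<cdot> (f +++ f') = (g \<cdot> f) +++ (g \<cdot> f')"
  by (simp add: linXYZ)

lemma zer_comp: assumes "X\<in>Ob C" "Y\<in>Ob C" "Z\<in>Ob C" "f\<in>Hom C X Y" shows "zer C Y Z \<cdot> f = zer C X Z"
proof -
  have z: "zer C Y Z \<in> Hom C Y Z" using assms zer_in by simp
  have "(zer C Y Z \<cdot> f) +++ (zer C Y Z \<cdot> f) = (zer C Y Z +++ zer C Y Z) \<cdot> f"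
    using comp_add_l[OF assms(1-4) z z] by simp
  also have "\<dots> = zer C Y Z \<cdot> f" using add_zer[OF assms(2,3) z] by simp
  finally show ?thesis using self_add[OF assms(1,3)] comp_in[OF assms(1-3,4) z] by simp
qed
lemma comp_zer: assumes "X\<in>Ob C" "Y\<in>Ob C" "Z\<in>Ob C" "g\<in>Hom C Y Z" shows "g \<cdot> zer C X Y = zer C X Z"
proof -
  have z: "zer C X Y \<in> Hom C X Y" using assms zer_in by simp
  have "(g \<cdot> zer C X Y) +++ (g \<cdot> zer C X Y) = g \<cdot> (zer C X Y +++ zer C X Y)"
    using comp_add_r[OF assms(1-3) z z assms(4)] by simp
  also have "\<dots> = g \<cdot> zer C X Y" using add_zer[OF assms(1,2) z] by simp
  finally show ?thesis using self_add[OF assms(1,3)] comp_in[OF assms(1-3) z assms(4)] by simp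
qed
lemma comp_neg_l: assumes "X\<in>Ob C" "Y\<in>Ob C" "Z\<in>Ob C" "f\<in>Hom C X Y" "g\<in>Hom C Y Z"
  shows "neg C g \<cdot> f = neg C (g \<cdot> f)"
proof -
  have n: "neg C g \<in> Hom C Y Z" using assms neg_in by simp
  have "(g \<cdot> f) +++ (neg C g \<cdot> f) = (g +++ neg C g) \<cdot> f"
    using comp_add_l[OF assms(1-5) n] by simp
  also have "\<dots> = zer C X Z" using add_neg[OF assms(2,3,5)] zer_comp[OF assms(1-4)] by simp
  finally show ?thesis using neg_unique[OF assms(1,3)] comp_in assms n by blast
qed
lemma comp_neg_r: assumes "X\<in>Ob C" "Y\<in>Ob C" "Z\<in>Ob C" "f\<in>Hom C X Y" "g\<in>Hom C Y Z"
  shows "g \<cdot> neg C f = neg C (g \<cdot> f)"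
proof -
  have n: "neg C f \<in> Hom C X Y" using assms neg_in by simp
  have "(g \<cdot> f) +++ (g \<cdot> neg C f) = g \<cdot> (f +++ neg C f)"
    using comp_add_r[OF assms(1-4) n assms(5)] by simp
  also have "\<dots> = zer C X Z" using add_neg[OF assms(1,2,4)] comp_zer[OF assms(1-3,5)] by simp
  finally show ?thesis using neg_unique[OF assms(1,3)] comp_in assms n by blast
qed

end

context ab begin


lemma neg_zer: "X\<in>Ob C \<Longrightarrow> Y\<in>Ob C \<Longrightarrow> neg C (zer C X Y) = zer C X Y"
  using neg_unique[of X Y "zer C X Y" "zer C X Y"] add_zer zer_in by simp

lemma split_biprod:
  assumes N: "N\<in>Ob C" and L: "L\<in>Ob C" and M: "M\<in>Ob C"
    and i: "i\<in>Hom C N L" and p: "p\<in>Hom C L M" and s: "s\<in>Hom C M L"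
    and ps: "p \<cdot> s = idt C M" and pi: "p \<cdot> i = zer C N M"
    and mono: "\<And>W g h. W\<in>Ob C \<Longrightarrow> g\<in>Hom C W N \<Longrightarrow> h\<in>Hom C W N \<Longrightarrow> i \<cdot> g = i \<cdot> h \<Longrightarrow> g = h"
    and ker: "\<And>u. u\<in>Hom C L L \<Longrightarrow> p \<cdot> u = zer C L M \<Longrightarrow> \<exists>v\<in>Hom C L N. i \<cdot> v = u"
  shows "is_biproduct C N M L"
proof -
  define t where "t = idt C L +++ neg C (s \<cdot> p)"
  have sp: "s \<cdot> p \<in> Hom C L L" using comp_in[OF L M L p s] .
  have idL: "idt C L \<in> Hom C L L" using id_in[OF L] .
  have nsp: "neg C (s \<cdot> p) \<in> Hom C L L" using neg_in[OF L L sp] .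
  have t: "t \<in> Hom C L L" unfolding t_def using add_in[OF L L idL nsp] .
  have "p \<cdot> t = (p \<cdot> idt C L) +++ (p \<cdot> neg C (s \<cdot> p))"
    unfolding t_def using comp_add_r[OF L L M idL nsp p] .
  also have "p \<cdot> idt C L = p" using id_r[OF L M p] .
  also have "p \<cdot> neg C (s \<cdot> p) = neg C (p \<cdot> (s \<cdot> p))" using comp_neg_r[OF L L M sp p] .
  also have "p \<cdot> (s \<cdot> p) = (p \<cdot> s) \<cdot> p" using assoc[OF L M L M p s p] .
  also have "(p \<cdot> s) \<cdot> p = p" using ps id_l[OF L M p] by simp
  finally have pt: "p \<cdot> t = zer C L M" using add_neg[OF L M p] by simp
  obtain r where r: "r\<in>Hom C L N" and ir: "i \<cdot> r = t" using ker[OF t pt] by blast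
  have ri: "r \<cdot> i = idt C N"
  proof (rule mono[OF N comp_in[OF N L N i r] id_in[OF N]])
    have "i \<cdot> (r \<cdot> i) = t \<cdot> i" using assoc[OF N L N L i r i] ir by simp
    also have "\<dots> = (idt C L \<cdot> i) +++ (neg C (s \<cdot> p) \<cdot> i)"
      unfolding t_def using comp_add_l[OF N L L i idL nsp] .
    also have "neg C (s \<cdot> p) \<cdot> i = neg C ((s \<cdot> p) \<cdot> i)" using comp_neg_l[OF N L L i sp] .
    also have "(s \<cdot> p) \<cdot> i = s \<cdot> (p \<cdot> i)" using assoc[OF N L M L i p s] by simp
    also have "s \<cdot> (p \<cdot> i) = zer C N L" using pi comp_zer[OF N M L s] by simp
    finally show "i \<cdot> (r \<cdot> i) = i \<cdot> idt C N"
      using neg_zer[OF N L] id_l[OF N L i] id_r[OF N L i] add_zer[OF N L i] by simp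
  qed
  have rs: "r \<cdot> s = zer C M N"
  proof (rule mono[OF M comp_in[OF M L N s r] zer_in[OF M N]])
    have "i \<cdot> (r \<cdot> s) = t \<cdot> s" using assoc[OF M L N L s r i] ir by simp
    also have "\<dots> = (idt C L \<cdot> s) +++ (neg C (s \<cdot> p) \<cdot> s)"
      unfolding t_def using comp_add_l[OF M L L s idL nsp] .
    also have "neg C (s \<cdot> p) \<cdot> s = neg C ((s \<cdot> p) \<cdot> s)" using comp_neg_l[OF M L L s sp] .
    also have "(s \<cdot> p) \<cdot> s = s \<cdot> (p \<cdot> s)" using assoc[OF M L M L s p s] by simp
    also have "s \<cdot> (p \<cdot> s) = s" using ps id_r[OF M L s] by simp
    finally show "i \<cdot> (r \<cdot> s) = i \<cdot> zer C M N"
      using id_l[OF M L s] add_neg[OF M L s] comp_zer[OF M N L i] by simp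
  qed
  have sum: "(i \<cdot> r) +++ (s \<cdot> p) = idt C L"
    using ir add_diff[OF L L idL sp] unfolding t_def by simp
  show ?thesis unfolding is_biproduct_def
    using L i s r p ri ps rs pi sum by blast
qed

lemma epi_section:
  assumes "is_projective C M" "L\<in>Ob C" "is_epi C L M p"
  shows "\<exists>s\<in>Hom C M L. p \<cdot> s = idt C M"
  using assms unfolding is_projective_def by (meson id_in)

lemma biprod_projective:
  assumes X: "X\<in>Ob C" and Y: "Y\<in>Ob C" and PX: "is_projective C X" and PY: "is_projective C Y"
    and B: "is_biproduct C X Y S"
  shows "is_projective C S"
proof -
  from B obtain i1 i2 p1 p2 where S: "S\<in>Ob C" and i1: "i1\<in>Hom C X S" and i2: "i2\<in>Hom C Y S"
    and p1: "p1\<in>Hom C S X" and p2: "p2\<in>Hom C S Y" and sum: "(i1 \<cdot> p1) +++ (i2 \<cdot> p2) = idt C S"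
    unfolding is_biproduct_def by blast
  show ?thesis unfolding is_projective_def
  proof (intro conjI S ballI allI impI)
    fix A B e f assume A: "A\<in>Ob C" and B: "B\<in>Ob C" and e: "is_epi C A B e" and f: "f\<in>Hom C S B"
    have eH: "e\<in>Hom C A B" using e unfolding is_epi_def by simp
    obtain g1 where g1: "g1\<in>Hom C X A" "e \<cdot> g1 = f \<cdot> i1"
      using PX A B e comp_in[OF X S B i1 f] unfolding is_projective_def by blast
    obtain g2 where g2: "g2\<in>Hom C Y A" "e \<cdot> g2 = f \<cdot> i2"
      using PY A B e comp_in[OF Y S B i2 f] unfolding is_projective_def by blast
    have a1: "g1 \<cdot> p1 \<in> Hom C S A" using comp_in[OF S X A p1 g1(1)] .
    have a2: "g2 \<cdot> p2 \<in> Hom C S A" using comp_in[OF S Y A p2 g2(1)] .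
    have "e \<cdot> ((g1 \<cdot> p1) +++ (g2 \<cdot> p2)) = (e \<cdot> (g1 \<cdot> p1)) +++ (e \<cdot> (g2 \<cdot> p2))"
      using comp_add_r[OF S A B a1 a2 eH] .
    also have "e \<cdot> (g1 \<cdot> p1) = (f \<cdot> i1) \<cdot> p1" using assoc[OF S X A B p1 g1(1) eH] g1(2) by simp
    also have "\<dots> = f \<cdot> (i1 \<cdot> p1)" using assoc[OF S X S B p1 i1 f] by simp
    also have "e \<cdot> (g2 \<cdot> p2) = (f \<cdot> i2) \<cdot> p2" using assoc[OF S Y A B p2 g2(1) eH] g2(2) by simp
    also have "\<dots> = f \<cdot> (i2 \<cdot> p2)" using assoc[OF S Y S B p2 i2 f] by simp
    also have "(f \<cdot> (i1 \<cdot> p1)) +++ (f \<cdot> (i2 \<cdot> p2)) = f \<cdot> ((i1 \<cdot> p1) +++ (i2 \<cdot> p2))"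
      using comp_add_r[OF S S B comp_in[OF S X S p1 i1] comp_in[OF S Y S p2 i2] f] by simp
    also have "\<dots> = f" using sum id_r[OF S B f] by simp
    finally show "\<exists>g\<in>Hom C S A. e \<cdot> g = f" using add_in[OF S A a1 a2] by blast
  qed
qed

lemma biprod_half:
  assumes X: "X\<in>Ob C" and Y: "Y\<in>Ob C" and S: "S\<in>Ob C" and S': "S'\<in>Ob C"
    and i1: "i1\<in>Hom C X S" and i2: "i2\<in>Hom C Y S" and p1: "p1\<in>Hom C S X" and p2: "p2\<in>Hom C S Y"
    and sum: "(i1 \<cdot> p1) +++ (i2 \<cdot> p2) = idt C S"
    and j1: "j1\<in>Hom C X S'" and j2: "j2\<in>Hom C Y S'" and q1: "q1\<in>Hom C S' X" and q2: "q2\<in>Hom C S' Y"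
    and e11: "q1 \<cdot> j1 = idt C X" and e22: "q2 \<cdot> j2 = idt C Y"
    and e12: "q1 \<cdot> j2 = zer C Y X" and e21: "q2 \<cdot> j1 = zer C X Y"
  shows "((i1 \<cdot> q1) +++ (i2 \<cdot> q2)) \<cdot> ((j1 \<cdot> p1) +++ (j2 \<cdot> p2)) = idt C S"
proof -
  define \<psi> where "\<psi> = (i1 \<cdot> q1) +++ (i2 \<cdot> q2)"
  have a1: "i1 \<cdot> q1 \<in> Hom C S' S" using comp_in[OF S' X S q1 i1] .
  have a2: "i2 \<cdot> q2 \<in> Hom C S' S" using comp_in[OF S' Y S q2 i2] .
  have psi: "\<psi> \<in> Hom C S' S" unfolding \<psi>_def using add_in[OF S' S a1 a2] .
  have b1: "j1 \<cdot> p1 \<in> Hom C S S'" using comp_in[OF S X S' p1 j1] .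
  have b2: "j2 \<cdot> p2 \<in> Hom C S S'" using comp_in[OF S Y S' p2 j2] .
  have pj1: "\<psi> \<cdot> j1 = i1"
  proof -
    have "\<psi> \<cdot> j1 = ((i1 \<cdot> q1) \<cdot> j1) +++ ((i2 \<cdot> q2) \<cdot> j1)"
      unfolding \<psi>_def using comp_add_l[OF X S' S j1 a1 a2] .
    also have "(i1 \<cdot> q1) \<cdot> j1 = i1" using assoc[OF X S' X S j1 q1 i1] e11 id_r[OF X S i1] by simp
    also have "(i2 \<cdot> q2) \<cdot> j1 = zer C X S" using assoc[OF X S' Y S j1 q2 i2] e21 comp_zer[OF X Y S i2] by simp
    finally show ?thesis using add_zer[OF X S i1] by simp
  qed
  have pj2: "\<psi> \<cdot> j2 = i2"
  proof -
    have "\<psi> \<cdot> j2 = ((i1 \<cdot> q1) \<cdot> j2) +++ ((i2 \<cdot> q2) \<cdot> j2)"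
      unfolding \<psi>_def using comp_add_l[OF Y S' S j2 a1 a2] .
    also have "(i1 \<cdot> q1) \<cdot> j2 = zer C Y S" using assoc[OF Y S' X S j2 q1 i1] e12 comp_zer[OF Y X S i1] by simp
    also have "(i2 \<cdot> q2) \<cdot> j2 = i2" using assoc[OF Y S' Y S j2 q2 i2] e22 id_r[OF Y S i2] by simp
    finally show ?thesis using zer_add[OF Y S i2] by simp
  qed
  have "\<psi> \<cdot> ((j1 \<cdot> p1) +++ (j2 \<cdot> p2)) = (\<psi> \<cdot> (j1 \<cdot> p1)) +++ (\<psi> \<cdot> (j2 \<cdot> p2))"
    using comp_add_r[OF S S' S b1 b2 psi] .
  also have "\<psi> \<cdot> (j1 \<cdot> p1) = i1 \<cdot> p1" using assoc[OF S X S' S p1 j1 psi] pj1 by simp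
  also have "\<psi> \<cdot> (j2 \<cdot> p2) = i2 \<cdot> p2" using assoc[OF S Y S' S p2 j2 psi] pj2 by simp
  finally show ?thesis using sum unfolding \<psi>_def by simp
qed

lemma biprod_iso:
  assumes X: "X\<in>Ob C" and Y: "Y\<in>Ob C" and B: "is_biproduct C X Y S" and B': "is_biproduct C X Y S'"
  shows "\<exists>\<theta>\<in>Hom C S S'. \<exists>\<psi>\<in>Hom C S' S. \<psi> \<cdot> \<theta> = idt C S \<and> \<theta> \<cdot> \<psi> = idt C S'"
proof -
  from B obtain i1 i2 p1 p2 where S: "S\<in>Ob C" and i1: "i1\<in>Hom C X S" and i2: "i2\<in>Hom C Y S"
    and p1: "p1\<in>Hom C S X" and p2: "p2\<in>Hom C S Y" and sum: "(i1 \<cdot> p1) +++ (i2 \<cdot> p2) = idt C S"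
    and e: "p1 \<cdot> i1 = idt C X" "p2 \<cdot> i2 = idt C Y" "p1 \<cdot> i2 = zer C Y X" "p2 \<cdot> i1 = zer C X Y"
    unfolding is_biproduct_def by blast
  from B' obtain j1 j2 q1 q2 where S': "S'\<in>Ob C" and j1: "j1\<in>Hom C X S'" and j2: "j2\<in>Hom C Y S'"
    and q1: "q1\<in>Hom C S' X" and q2: "q2\<in>Hom C S' Y" and sum': "(j1 \<cdot> q1) +++ (j2 \<cdot> q2) = idt C S'"
    and e': "q1 \<cdot> j1 = idt C X" "q2 \<cdot> j2 = idt C Y" "q1 \<cdot> j2 = zer C Y X" "q2 \<cdot> j1 = zer C X Y"
    unfolding is_biproduct_def by blast
  have h1: "((i1 \<cdot> q1) +++ (i2 \<cdot> q2)) \<cdot> ((j1 \<cdot> p1) +++ (j2 \<cdot> p2)) = idt C S"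
    by (rule biprod_half[OF X Y S S' i1 i2 p1 p2 sum j1 j2 q1 q2 e'])
  have h2: "((j1 \<cdot> p1) +++ (j2 \<cdot> p2)) \<cdot> ((i1 \<cdot> q1) +++ (i2 \<cdot> q2)) = idt C S'"
    by (rule biprod_half[OF X Y S' S j1 j2 q1 q2 sum' i1 i2 p1 p2 e])
  have t: "(j1 \<cdot> p1) +++ (j2 \<cdot> p2) \<in> Hom C S S'"
    using add_in[OF S S' comp_in[OF S X S' p1 j1] comp_in[OF S Y S' p2 j2]] .
  have u: "(i1 \<cdot> q1) +++ (i2 \<cdot> q2) \<in> Hom C S' S"
    using add_in[OF S' S comp_in[OF S' X S q1 i1] comp_in[OF S' Y S q2 i2]] .
  show ?thesis using h1 h2 t u by blast
qed

lemma projective_iso: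
  assumes P: "is_projective C P" and P': "P'\<in>Ob C" and th: "\<theta>\<in>Hom C P P'" and ps: "\<psi>\<in>Hom C P' P"
    and e: "\<theta> \<cdot> \<psi> = idt C P'"
  shows "is_projective C P'"
  unfolding is_projective_def
proof (intro conjI P' ballI allI impI)
  have PO: "P\<in>Ob C" using P unfolding is_projective_def by simp
  fix A B ep f assume A: "A\<in>Ob C" and B: "B\<in>Ob C" and ep: "is_epi C A B ep" and f: "f\<in>Hom C P' B"
  have eH: "ep\<in>Hom C A B" using ep unfolding is_epi_def by simp
  obtain g where g: "g\<in>Hom C P A" "ep \<cdot> g = f \<cdot> \<theta>"
    using P A B ep comp_in[OF PO P' B th f] unfolding is_projective_def by blast
  have "ep \<cdot> (g \<cdot> \<psi>) = (f \<cdot> \<theta>) \<cdot> \<psi>" using assoc[OF P' PO A B ps g(1) eH] g(2) by simp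
  also have "\<dots> = f" using assoc[OF P' PO P' B ps th f] e id_r[OF P' B f] by simp
  finally show "\<exists>g\<in>Hom C P' A. ep \<cdot> g = f" using comp_in[OF P' PO A ps g(1)] by blast
qed

end

locale cyc = ab C for C :: "('o, 'a, 'k::field) kcat" +
  fixes m :: nat assumes m1: "1 \<le> m"
begin

abbreviation CC where "CC \<equiv> cyc_cat C m"

lemma sm_less[simp]: "Suc i mod m < m" using m1 by simp

lemma cyc_Ob: "(M,d) \<in> Ob CC \<longleftrightarrow> (\<forall>i<m. M i \<in> Ob C \<and> d i \<in> Hom C (M i) (M (Suc i mod m)) \<and>
   d (Suc i mod m) \<cdot> d i = zer C (M i) (M (Suc (Suc i mod m) mod m))) \<and> (\<forall>i\<ge>m. M i = undefined \<and> d i = undefined)"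
  by (simp add: cyc_cat_def)
lemma cyc_Hom: "f \<in> Hom CC (M,d) (N,e) \<longleftrightarrow> (\<forall>i<m. f i \<in> Hom C (M i) (N i) \<and> e i \<cdot> f i = f (Suc i mod m) \<cdot> d i)
   \<and> (\<forall>i\<ge>m. f i = undefined)"
  by (simp add: cyc_cat_def)
lemma ObD: "(M,d) \<in> Ob CC \<Longrightarrow> i < m \<Longrightarrow> M i \<in> Ob C \<and> d i \<in> Hom C (M i) (M (Suc i mod m)) \<and>
   d (Suc i mod m) \<cdot> d i = zer C (M i) (M (Suc (Suc i mod m) mod m))"
  unfolding cyc_Ob by blast
lemma HomD: "f \<in> Hom CC (M,d) (N,e) \<Longrightarrow> i < m \<Longrightarrow> f i \<in> Hom C (M i) (N i) \<and> e i \<cdot> f i = f (Suc i mod m) \<cdot> d i"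
  unfolding cyc_Hom by blast
lemma cyc_cmp: "cmp CC g f = (\<lambda>i. if i < m then g i \<cdot> f i else undefined)"
  by (simp add: cyc_cat_def)
lemma cyc_idt: "idt CC (M,d) = (\<lambda>i. if i < m then idt C (M i) else undefined)"
  by (simp add: cyc_cat_def fun_eq_iff)
lemma cyc_zer: "zer CC (M,d) (N,e) = (\<lambda>i. if i < m then zer C (M i) (N i) else undefined)"
  by (simp add: cyc_cat_def fun_eq_iff)

lemma cyc_comp_in:
  assumes X: "(M,d) \<in> Ob CC" and Y: "(N,e) \<in> Ob CC" and Z: "(P,c) \<in> Ob CC"
    and f: "f \<in> Hom CC (M,d) (N,e)" and g: "g \<in> Hom CC (N,e) (P,c)"
  shows "cmp CC g f \<in> Hom CC (M,d) (P,c)"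
  unfolding cyc_Hom cyc_cmp
proof (intro conjI allI impI)
  fix i assume i: "i < m"
  define j where "j = Suc i mod m"
  have j: "j < m" unfolding j_def by simp
  have O: "M i \<in> Ob C" "N i \<in> Ob C" "P i \<in> Ob C" "M j \<in> Ob C" "N j \<in> Ob C" "P j \<in> Ob C"
    using X Y Z i j unfolding cyc_Ob by auto
  have H: "f i \<in> Hom C (M i) (N i)" "g i \<in> Hom C (N i) (P i)" "f j \<in> Hom C (M j) (N j)" "g j \<in> Hom C (N j) (P j)"
    "d i \<in> Hom C (M i) (M j)" "e i \<in> Hom C (N i) (N j)" "c i \<in> Hom C (P i) (P j)"
    using f g X Y Z i j unfolding cyc_Hom cyc_Ob j_def by auto
  have cf: "e i \<cdot> f i = f j \<cdot> d i" "c i \<cdot> g i = g j \<cdot> e i" using f g i unfolding cyc_Hom j_def by auto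
  show "(if i < m then g i \<cdot> f i else undefined) \<in> Hom C (M i) (P i)" using i comp_in[OF O(1-3) H(1,2)] by simp
  have "c i \<cdot> (g i \<cdot> f i) = (c i \<cdot> g i) \<cdot> f i" using assoc[OF O(1-3) O(6) H(1,2,7)] .
  also have "\<dots> = (g j \<cdot> e i) \<cdot> f i" using cf by simp
  also have "\<dots> = g j \<cdot> (e i \<cdot> f i)" using assoc[OF O(1,2,5,6) H(1,6,4)] by simp
  also have "\<dots> = g j \<cdot> (f j \<cdot> d i)" using cf by simp
  also have "\<dots> = (g j \<cdot> f j) \<cdot> d i" using assoc[OF O(1,4,5,6) H(5,3,4)] .
  finally show "c i \<cdot> (if i < m then g i \<cdot> f i else undefined) =
         (if Suc i mod m < m then g (Suc i mod m) \<cdot> f (Suc i mod m) else undefined) \<cdot> d i"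
    using i j unfolding j_def by simp
qed auto

lemma cyc_id_in: assumes X: "(M,d) \<in> Ob CC" shows "idt CC (M,d) \<in> Hom CC (M,d) (M,d)"
  unfolding cyc_Hom cyc_idt
proof (intro conjI allI impI)
  fix i assume i: "i < m"
  have O: "M i \<in> Ob C" "M (Suc i mod m) \<in> Ob C" "d i \<in> Hom C (M i) (M (Suc i mod m))" using X i unfolding cyc_Ob by auto
  show "(if i < m then idt C (M i) else undefined) \<in> Hom C (M i) (M i)" using i id_in O by simp
  show "d i \<cdot> (if i < m then idt C (M i) else undefined) =
         (if Suc i mod m < m then idt C (M (Suc i mod m)) else undefined) \<cdot> d i"
    using i O id_l id_r by simp
qed auto

lemma iso_refl: assumes X: "(M,d) \<in> Ob CC" shows "isomorphic CC (M,d) (M,d)"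
proof -
  have "cmp CC (idt CC (M, d)) (idt CC (M, d)) = idt CC (M, d)"
    unfolding cyc_cmp cyc_idt using X unfolding cyc_Ob by (auto simp: fun_eq_iff id_l id_in)
  thus ?thesis unfolding isomorphic_def using X cyc_id_in[OF X] by blast
qed

lemma iso_sym: "isomorphic CC X Y \<Longrightarrow> isomorphic CC Y X"
  unfolding isomorphic_def by blast

lemma inv_comp:
  assumes A: "A\<in>Ob C" and B: "B\<in>Ob C" and Z: "Z\<in>Ob C"
    and a: "a\<in>Hom C A B" and b: "b\<in>Hom C B Z" and a': "a'\<in>Hom C B A" and b': "b'\<in>Hom C Z B"
    and ea: "a' \<cdot> a = idt C A" and eb: "b' \<cdot> b = idt C B"
  shows "(a' \<cdot> b') \<cdot> (b \<cdot> a) = idt C A"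
proof -
  have "(a' \<cdot> b') \<cdot> (b \<cdot> a) = a' \<cdot> (b' \<cdot> (b \<cdot> a))"
    using assoc[OF A Z B A comp_in[OF A B Z a b] b' a'] by simp
  also have "b' \<cdot> (b \<cdot> a) = (b' \<cdot> b) \<cdot> a" using assoc[OF A B Z B a b b'] .
  also have "\<dots> = a" using eb id_l[OF A B a] by simp
  finally show ?thesis using ea by simp
qed

lemma iso_trans:
  assumes XY: "isomorphic CC X Y" and YZ: "isomorphic CC Y Z" shows "isomorphic CC X Z"
proof -
  obtain M d N e P c where XYZ: "X = (M,d)" "Y = (N,e)" "Z = (P,c)" by (cases X, cases Y, cases Z) auto
  have X: "(M,d) \<in> Ob CC" and Y: "(N,e) \<in> Ob CC" and Z: "(P,c) \<in> Ob CC"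
    using XY YZ XYZ unfolding isomorphic_def by auto
  obtain f f' where f: "f \<in> Hom CC (M,d) (N,e)" and f': "f' \<in> Hom CC (N,e) (M,d)"
    and ff: "cmp CC f' f = idt CC (M,d)" "cmp CC f f' = idt CC (N,e)"
    using XY XYZ unfolding isomorphic_def by auto
  obtain g g' where g: "g \<in> Hom CC (N,e) (P,c)" and g': "g' \<in> Hom CC (P,c) (N,e)"
    and gg: "cmp CC g' g = idt CC (N,e)" "cmp CC g g' = idt CC (P,c)"
    using YZ XYZ unfolding isomorphic_def by auto
  have h1: "cmp CC (cmp CC f' g') (cmp CC g f) = idt CC (M,d)"
  proof -
    { fix i assume i: "i < m"
      have O: "M i \<in> Ob C" "N i \<in> Ob C" "P i \<in> Ob C" using X Y Z i unfolding cyc_Ob by auto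
      have H: "f i \<in> Hom C (M i) (N i)" "g i \<in> Hom C (N i) (P i)" "f' i \<in> Hom C (N i) (M i)" "g' i \<in> Hom C (P i) (N i)"
        using f g f' g' i unfolding cyc_Hom by auto
      have E: "f' i \<cdot> f i = idt C (M i)" "g' i \<cdot> g i = idt C (N i)"
        using fun_cong[OF ff(1), of i] fun_cong[OF gg(1), of i] i unfolding cyc_cmp cyc_idt by auto
      have "(f' i \<cdot> g' i) \<cdot> (g i \<cdot> f i) = idt C (M i)" by (rule inv_comp[OF O H E]) }
    thus ?thesis unfolding cyc_cmp cyc_idt by (auto simp: fun_eq_iff)
  qed
  have h2: "cmp CC (cmp CC g f) (cmp CC f' g') = idt CC (P,c)"
  proof -
    { fix i assume i: "i < m"
      have O: "M i \<in> Ob C" "N i \<in> Ob C" "P i \<in> Ob C" using X Y Z i unfolding cyc_Ob by auto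
      have H: "f i \<in> Hom C (M i) (N i)" "g i \<in> Hom C (N i) (P i)" "f' i \<in> Hom C (N i) (M i)" "g' i \<in> Hom C (P i) (N i)"
        using f g f' g' i unfolding cyc_Hom by auto
      have E: "f i \<cdot> f' i = idt C (N i)" "g i \<cdot> g' i = idt C (P i)"
        using fun_cong[OF ff(2), of i] fun_cong[OF gg(2), of i] i unfolding cyc_cmp cyc_idt by auto
      have "(g i \<cdot> f i) \<cdot> (f' i \<cdot> g' i) = idt C (P i)" by (rule inv_comp[OF O(3,2,1) H(4,3,2,1) E(2,1)]) }
    thus ?thesis unfolding cyc_cmp cyc_idt by (auto simp: fun_eq_iff)
  qed
  show ?thesis unfolding isomorphic_def XYZ
    apply (intro conjI X Z)
    apply (rule bexI[OF _ cyc_comp_in[OF X Y Z f g]])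
    apply (rule bexI[OF _ cyc_comp_in[OF Z Y X g' f']])
    using h1 h2 by simp
qed

lemma iso_comp:
  assumes "isomorphic CC (M,d) (N,e)"
  shows "\<exists>\<theta> \<psi>. \<theta> \<in> Hom CC (M,d) (N,e) \<and> \<psi> \<in> Hom CC (N,e) (M,d) \<and>
     (\<forall>i<m. \<psi> i \<cdot> \<theta> i = idt C (M i) \<and> \<theta> i \<cdot> \<psi> i = idt C (N i))"
proof -
  obtain f f' where f: "f \<in> Hom CC (M,d) (N,e)" and f': "f' \<in> Hom CC (N,e) (M,d)"
    and ff: "cmp CC f' f = idt CC (M,d)" "cmp CC f f' = idt CC (N,e)"
    using assms unfolding isomorphic_def by auto
  have "\<forall>i<m. f' i \<cdot> f i = idt C (M i) \<and> f i \<cdot> f' i = idt C (N i)"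
  proof (intro allI impI)
    fix i assume i: "i < m"
    show "f' i \<cdot> f i = idt C (M i) \<and> f i \<cdot> f' i = idt C (N i)"
      using fun_cong[OF ff(1), of i] fun_cong[OF ff(2), of i] i unfolding cyc_cmp cyc_idt by simp
  qed
  thus ?thesis using f f' by blast
qed

lemma isocls_eq: "isomorphic CC X Y \<Longrightarrow> isocls CC X = isocls CC Y"
  unfolding isocls_def by (auto intro: iso_trans iso_sym)

lemma rep_iso: assumes "X \<in> Ob CC" shows "isomorphic CC X (rep (isocls CC X))"
proof -
  obtain M d where X: "X = (M,d)" by (cases X)
  have "X \<in> isocls CC X" unfolding isocls_def using iso_refl assms X by simp
  hence "rep (isocls CC X) \<in> isocls CC X" unfolding rep_def by (rule someI)
  thus ?thesis unfolding isocls_def by simp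
qed

lemma iso_CmP: assumes XY: "isomorphic CC X Y" and P: "in_CmP C m X" shows "in_CmP C m Y"
proof -
  obtain M d N e where XY': "X = (M,d)" "Y = (N,e)" by (cases X, cases Y) auto
  have Y: "(N,e) \<in> Ob CC" and X: "(M,d) \<in> Ob CC" using XY XY' unfolding isomorphic_def by auto
  obtain \<theta> \<psi> where t: "\<theta> \<in> Hom CC (M,d) (N,e)" and p: "\<psi> \<in> Hom CC (N,e) (M,d)"
    and e: "\<forall>i<m. \<psi> i \<cdot> \<theta> i = idt C (M i) \<and> \<theta> i \<cdot> \<psi> i = idt C (N i)"
    using iso_comp XY XY' by blast
  { fix i assume i: "i < m"
    have "is_projective C (N i)"
      apply (rule projective_iso[of "M i" _ "\<theta> i" "\<psi> i"])
      using P XY' i apply (simp add: in_CmP_def)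
      using Y i apply (simp add: cyc_Ob)
      using t i apply (simp add: cyc_Hom)
      using p i apply (simp add: cyc_Hom)
      using e i by simp }
  thus ?thesis using Y XY' unfolding in_CmP_def by simp
qed

lemma iso_d0: assumes XY: "isomorphic CC X Y" and D: "d0_nonzero C m X" shows "d0_nonzero C m Y"
proof -
  obtain M d N e where XY': "X = (M,d)" "Y = (N,e)" by (cases X, cases Y) auto
  have Y: "(N,e) \<in> Ob CC" and X: "(M,d) \<in> Ob CC" using XY XY' unfolding isomorphic_def by auto
  obtain \<theta> \<psi> where t: "\<theta> \<in> Hom CC (M,d) (N,e)" and p: "\<psi> \<in> Hom CC (N,e) (M,d)"
    and e: "\<forall>i<m. \<psi> i \<cdot> \<theta> i = idt C (M i) \<and> \<theta> i \<cdot> \<psi> i = idt C (N i)"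
    using iso_comp XY XY' by blast
  have m0: "0 < m" using m1 by simp
  define j where "j = Suc 0 mod m"
  have j: "j < m" unfolding j_def by (rule sm_less)
  have O: "M 0 \<in> Ob C" "N 0 \<in> Ob C" "M j \<in> Ob C" "N j \<in> Ob C"
    using ObD[OF X m0] ObD[OF Y m0] ObD[OF X j] ObD[OF Y j] by auto
  have H: "\<theta> 0 \<in> Hom C (M 0) (N 0)" "\<psi> 0 \<in> Hom C (N 0) (M 0)" "\<psi> j \<in> Hom C (N j) (M j)"
     "d 0 \<in> Hom C (M 0) (M j)" "e 0 \<in> Hom C (N 0) (N j)"
    using HomD[OF t m0] HomD[OF p m0] HomD[OF p j] ObD[OF X m0] ObD[OF Y m0] unfolding j_def by auto
  have ch: "d 0 \<cdot> \<psi> 0 = \<psi> j \<cdot> e 0" using HomD[OF p m0] unfolding j_def by auto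
  show ?thesis
  proof (rule ccontr)
    assume "\<not> d0_nonzero C m Y"
    hence z: "e 0 = zer C (N 0) (N j)" using XY' unfolding d0_nonzero_def j_def by simp
    have "d 0 = d 0 \<cdot> (\<psi> 0 \<cdot> \<theta> 0)" using e m0 id_r[OF O(1,3) H(4)] by simp
    also have "\<dots> = (d 0 \<cdot> \<psi> 0) \<cdot> \<theta> 0" using assoc[OF O(1,2,1,3) H(1,2,4)] .
    also have "\<dots> = zer C (M 0) (M j)" using ch z comp_zer[OF O(2,4,3) H(3)] zer_comp[OF O(1,2,3) H(1)] by simp
    finally show False using D XY' unfolding d0_nonzero_def j_def by simp
  qed
qed

end

context ab begin
definition bpd :: "'o \<Rightarrow> 'o \<times> 'a \<times> 'a \<times> 'a \<times> 'a" where
  "bpd W = (SOME (S,i1,i2,p1,p2). S \<in> Ob C \<and> i1 \<in> Hom C W S \<and> i2 \<in> Hom C W S \<and> p1 \<in> Hom C S W \<and> p2 \<in> Hom C S W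
     \<and> p1 \<cdot> i1 = idt C W \<and> p2 \<cdot> i2 = idt C W \<and> p1 \<cdot> i2 = zer C W W \<and> p2 \<cdot> i1 = zer C W W
     \<and> (i1 \<cdot> p1) +++ (i2 \<cdot> p2) = idt C S)"
definition "bS W = fst (bpd W)"
definition "bi1 W = fst (snd (bpd W))"
definition "bi2 W = fst (snd (snd (bpd W)))"
definition "bp1 W = fst (snd (snd (snd (bpd W))))"
definition "bp2 W = snd (snd (snd (snd (bpd W))))"

lemma bp_props: assumes W: "W \<in> Ob C"
  shows "bS W \<in> Ob C \<and> bi1 W \<in> Hom C W (bS W) \<and> bi2 W \<in> Hom C W (bS W) \<and> bp1 W \<in> Hom C (bS W) W \<and> bp2 W \<in> Hom C (bS W) W
     \<and> bp1 W \<cdot> bi1 W = idt C W \<and> bp2 W \<cdot> bi2 W = idt C W \<and> bp1 W \<cdot> bi2 W = zer C W W \<and> bp2 W \<cdot> bi1 W = zer C W W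
     \<and> (bi1 W \<cdot> bp1 W) +++ (bi2 W \<cdot> bp2 W) = idt C (bS W)"
proof -
  have "\<exists>S. is_biproduct C W W S" using abel W unfolding is_abelian_def by blast
  then obtain S i1 i2 p1 p2 where "S \<in> Ob C \<and> i1 \<in> Hom C W S \<and> i2 \<in> Hom C W S \<and> p1 \<in> Hom C S W \<and> p2 \<in> Hom C S W
     \<and> p1 \<cdot> i1 = idt C W \<and> p2 \<cdot> i2 = idt C W \<and> p1 \<cdot> i2 = zer C W W \<and> p2 \<cdot> i1 = zer C W W
     \<and> (i1 \<cdot> p1) +++ (i2 \<cdot> p2) = idt C S" unfolding is_biproduct_def by blast
  hence "\<exists>x. (case x of (S,i1,i2,p1,p2) \<Rightarrow> S \<in> Ob C \<and> i1 \<in> Hom C W S \<and> i2 \<in> Hom C W S \<and> p1 \<in> Hom C S W \<and> p2 \<in> Hom C S W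
     \<and> p1 \<cdot> i1 = idt C W \<and> p2 \<cdot> i2 = idt C W \<and> p1 \<cdot> i2 = zer C W W \<and> p2 \<cdot> i1 = zer C W W
     \<and> (i1 \<cdot> p1) +++ (i2 \<cdot> p2) = idt C S)" by (intro exI[of _ "(S,i1,i2,p1,p2)"]) simp
  hence "case bpd W of (S,i1,i2,p1,p2) \<Rightarrow> S \<in> Ob C \<and> i1 \<in> Hom C W S \<and> i2 \<in> Hom C W S \<and> p1 \<in> Hom C S W \<and> p2 \<in> Hom C S W
     \<and> p1 \<cdot> i1 = idt C W \<and> p2 \<cdot> i2 = idt C W \<and> p1 \<cdot> i2 = zer C W W \<and> p2 \<cdot> i1 = zer C W W
     \<and> (i1 \<cdot> p1) +++ (i2 \<cdot> p2) = idt C S" unfolding bpd_def by (rule someI_ex)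
  thus ?thesis unfolding bS_def bi1_def bi2_def bp1_def bp2_def by (simp split: prod.splits)
qed

lemma bp_sq: assumes W: "W \<in> Ob C"
  shows "(bi2 W \<cdot> bp1 W) \<cdot> (bi2 W \<cdot> bp1 W) = zer C (bS W) (bS W)"
proof -
  note P = bp_props[OF W]
  have S: "bS W \<in> Ob C" using P by simp
  have H: "bi2 W \<in> Hom C W (bS W)" "bp1 W \<in> Hom C (bS W) W" using P by auto
  have "(bi2 W \<cdot> bp1 W) \<cdot> (bi2 W \<cdot> bp1 W) = bi2 W \<cdot> (bp1 W \<cdot> (bi2 W \<cdot> bp1 W))"
    using assoc[OF S S W S comp_in[OF S W S H(2) H(1)] H(2) H(1)] by simp
  also have "bp1 W \<cdot> (bi2 W \<cdot> bp1 W) = (bp1 W \<cdot> bi2 W) \<cdot> bp1 W" using assoc[OF S W S W H(2) H(1) H(2)] .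
  also have "\<dots> = zer C (bS W) W" using P zer_comp[OF S W W H(2)] by simp
  finally show ?thesis using comp_zer[OF S W S H(1)] by simp
qed
end

context cyc begin

definition freeO :: "'o \<Rightarrow> nat \<Rightarrow> (nat \<Rightarrow> 'o) \<times> (nat \<Rightarrow> 'a)" where
  "freeO W j = (\<lambda>k. if k < m then (if m = 1 then bS W else W) else undefined,
                \<lambda>k. if k < m then (if m = 1 then bi2 W \<cdot> bp1 W else if k = j then idt C W else zer C W W) else undefined)"

definition cofO :: "'o \<Rightarrow> nat \<Rightarrow> (nat \<Rightarrow> 'o) \<times> (nat \<Rightarrow> 'a)" where
  "cofO W j = (\<lambda>k. if k < m then (if m = 1 then bS W else W) else undefined,
                \<lambda>k. if k < m then (if m = 1 then bi2 W \<cdot> bp1 W else if Suc k mod m = j then idt C W else zer C W W) else undefined)"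

lemma m1_cases: "m = 1 \<Longrightarrow> k < m \<Longrightarrow> k = 0 \<and> Suc k mod m = 0" by simp

lemma sm_ne: assumes "m \<noteq> 1" shows "Suc k mod m \<noteq> k"
proof (cases "Suc k < m")
  case True thus ?thesis by simp
next
  case False
  show ?thesis
  proof (cases "k < m")
    case True
    hence "Suc k = m" using False by simp
    thus ?thesis using assms by auto
  next
    case False
    show ?thesis using False sm_less[of k] by metis
  qed
qed

lemma freeO_Ob: assumes W: "W \<in> Ob C" shows "freeO W j \<in> Ob CC"
  unfolding freeO_def cyc_Ob
proof (intro conjI allI impI)
  fix k assume k: "k < m"
  note P = bp_props[OF W]
  show "(if k < m then if m = 1 then bS W else W else undefined) \<in> Ob C" using k W P by simp
  show "(if k < m then if m = 1 then bi2 W \<cdot> bp1 W else if k = j then idt C W else zer C W W else undefined)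
    \<in> Hom C (if k < m then if m = 1 then bS W else W else undefined)
        (if Suc k mod m < m then if m = 1 then bS W else W else undefined)"
    using k W P comp_in[of "bS W" W "bS W" "bp1 W" "bi2 W"] id_in zer_in by auto
  show "(if Suc k mod m < m then if m = 1 then bi2 W \<cdot> bp1 W else if Suc k mod m = j then idt C W else zer C W W else undefined) \<cdot>
    (if k < m then if m = 1 then bi2 W \<cdot> bp1 W else if k = j then idt C W else zer C W W else undefined) =
    zer C (if k < m then if m = 1 then bS W else W else undefined)
     (if Suc (Suc k mod m) mod m < m then if m = 1 then bS W else W else undefined)"
  proof (cases "m = 1")
    case True thus ?thesis using k bp_sq[OF W] by simp
  next
    case False
    have "Suc k mod m \<noteq> k" using sm_ne[OF False] .
    thus ?thesis using k False W zer_comp[OF W W W] comp_zer[OF W W W] id_in[OF W] zer_in[OF W W]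
      by auto
  qed
qed auto

lemma cofO_Ob: assumes W: "W \<in> Ob C" shows "cofO W j \<in> Ob CC"
  unfolding cofO_def cyc_Ob
proof (intro conjI allI impI)
  fix k assume k: "k < m"
  note P = bp_props[OF W]
  show "(if k < m then if m = 1 then bS W else W else undefined) \<in> Ob C" using k W P by simp
  show "(if k < m then if m = 1 then bi2 W \<cdot> bp1 W else if Suc k mod m = j then idt C W else zer C W W else undefined)
    \<in> Hom C (if k < m then if m = 1 then bS W else W else undefined)
        (if Suc k mod m < m then if m = 1 then bS W else W else undefined)"
    using k W P comp_in[of "bS W" W "bS W" "bp1 W" "bi2 W"] id_in zer_in by auto
  show "(if Suc k mod m < m then if m = 1 then bi2 W \<cdot> bp1 W else if Suc (Suc k mod m) mod m = j then idt C W else zer C W W else undefined) \<cdot>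
    (if k < m then if m = 1 then bi2 W \<cdot> bp1 W else if Suc k mod m = j then idt C W else zer C W W else undefined) =
    zer C (if k < m then if m = 1 then bS W else W else undefined)
     (if Suc (Suc k mod m) mod m < m then if m = 1 then bS W else W else undefined)"
  proof (cases "m = 1")
    case True thus ?thesis using k bp_sq[OF W] by simp
  next
    case False
    have "Suc (Suc k mod m) mod m \<noteq> Suc k mod m" using sm_ne[OF False] .
    thus ?thesis using k False W zer_comp[OF W W W] comp_zer[OF W W W] id_in[OF W] zer_in[OF W W]
      by auto
  qed
qed auto

end

context ab begin

context
  fixes W S i1 i2 p1 p2
  assumes W: "W \<in> Ob C" and S: "S \<in> Ob C" and i1: "i1 \<in> Hom C W S" and i2: "i2 \<in> Hom C W S"
    and p1: "p1 \<in> Hom C S W" and p2: "p2 \<in> Hom C S W"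
    and e11: "p1 \<cdot> i1 = idt C W" and e22: "p2 \<cdot> i2 = idt C W" and e12: "p1 \<cdot> i2 = zer C W W" and e21: "p2 \<cdot> i1 = zer C W W"
begin

lemma fr_hom: assumes N: "N \<in> Ob C" and e: "e \<in> Hom C N N" and g: "g \<in> Hom C W N"
  shows "(g \<cdot> p1) +++ ((e \<cdot> g) \<cdot> p2) \<in> Hom C S N"
  using add_in[OF S N comp_in[OF S W N p1 g] comp_in[OF S W N p2 comp_in[OF W N N g e]]] .

lemma fr_chain: assumes N: "N \<in> Ob C" and e: "e \<in> Hom C N N" and ee: "e \<cdot> e = zer C N N" and g: "g \<in> Hom C W N"
  shows "e \<cdot> ((g \<cdot> p1) +++ ((e \<cdot> g) \<cdot> p2)) = ((g \<cdot> p1) +++ ((e \<cdot> g) \<cdot> p2)) \<cdot> (i2 \<cdot> p1)"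
proof -
  have eg: "e \<cdot> g \<in> Hom C W N" using comp_in[OF W N N g e] .
  have a1: "g \<cdot> p1 \<in> Hom C S N" using comp_in[OF S W N p1 g] .
  have a2: "(e \<cdot> g) \<cdot> p2 \<in> Hom C S N" using comp_in[OF S W N p2 eg] .
  have "e \<cdot> ((g \<cdot> p1) +++ ((e \<cdot> g) \<cdot> p2)) = (e \<cdot> (g \<cdot> p1)) +++ (e \<cdot> ((e \<cdot> g) \<cdot> p2))"
    using comp_add_r[OF S N N a1 a2 e] .
  also have "e \<cdot> (g \<cdot> p1) = (e \<cdot> g) \<cdot> p1" using assoc[OF S W N N p1 g e] .
  also have "e \<cdot> ((e \<cdot> g) \<cdot> p2) = (e \<cdot> (e \<cdot> g)) \<cdot> p2" using assoc[OF S W N N p2 eg e] .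
  also have "e \<cdot> (e \<cdot> g) = zer C W N" using assoc[OF W N N N g e e] ee zer_comp[OF W N N g] by simp
  also have "zer C W N \<cdot> p2 = zer C S N" using zer_comp[OF S W N p2] .
  also have "((e \<cdot> g) \<cdot> p1) +++ zer C S N = (e \<cdot> g) \<cdot> p1" using add_zer[OF S N comp_in[OF S W N p1 eg]] .
  finally have L: "e \<cdot> ((g \<cdot> p1) +++ ((e \<cdot> g) \<cdot> p2)) = (e \<cdot> g) \<cdot> p1" .
  have G: "(g \<cdot> p1) +++ ((e \<cdot> g) \<cdot> p2) \<in> Hom C S N" using fr_hom[OF N e g] .
  have "((g \<cdot> p1) +++ ((e \<cdot> g) \<cdot> p2)) \<cdot> (i2 \<cdot> p1) = (((g \<cdot> p1) +++ ((e \<cdot> g) \<cdot> p2)) \<cdot> i2) \<cdot> p1"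
    using assoc[OF S W S N p1 i2 G] .
  also have "((g \<cdot> p1) +++ ((e \<cdot> g) \<cdot> p2)) \<cdot> i2 = ((g \<cdot> p1) \<cdot> i2) +++ (((e \<cdot> g) \<cdot> p2) \<cdot> i2)"
    using comp_add_l[OF W S N i2 a1 a2] .
  also have "(g \<cdot> p1) \<cdot> i2 = zer C W N" using assoc[OF W S W N i2 p1 g] e12 comp_zer[OF W W N g] by simp
  also have "((e \<cdot> g) \<cdot> p2) \<cdot> i2 = e \<cdot> g" using assoc[OF W S W N i2 p2 eg] e22 id_r[OF W N eg] by simp
  also have "zer C W N +++ (e \<cdot> g) = e \<cdot> g" using zer_add[OF W N eg] .
  finally show ?thesis using L by simp
qed

lemma fr_ext: assumes N: "N \<in> Ob C" and e: "e \<in> Hom C N N" and g: "g \<in> Hom C W N"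
  shows "((g \<cdot> p1) +++ ((e \<cdot> g) \<cdot> p2)) \<cdot> i1 = g"
proof -
  have eg: "e \<cdot> g \<in> Hom C W N" using comp_in[OF W N N g e] .
  have a1: "g \<cdot> p1 \<in> Hom C S N" using comp_in[OF S W N p1 g] .
  have a2: "(e \<cdot> g) \<cdot> p2 \<in> Hom C S N" using comp_in[OF S W N p2 eg] .
  have "((g \<cdot> p1) +++ ((e \<cdot> g) \<cdot> p2)) \<cdot> i1 = ((g \<cdot> p1) \<cdot> i1) +++ (((e \<cdot> g) \<cdot> p2) \<cdot> i1)"
    using comp_add_l[OF W S N i1 a1 a2] .
  also have "(g \<cdot> p1) \<cdot> i1 = g" using assoc[OF W S W N i1 p1 g] e11 id_r[OF W N g] by simp
  also have "((e \<cdot> g) \<cdot> p2) \<cdot> i1 = zer C W N" using assoc[OF W S W N i1 p2 eg] e21 comp_zer[OF W W N eg] by simp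
  finally show ?thesis using add_zer[OF W N g] by simp
qed

lemma fr_nat: assumes N: "N \<in> Ob C" and L: "L \<in> Ob C" and e: "e \<in> Hom C N N" and dL: "dL \<in> Hom C L L"
    and g: "g \<in> Hom C W N" and \<phi>: "\<phi> \<in> Hom C N L" and ch: "dL \<cdot> \<phi> = \<phi> \<cdot> e"
  shows "\<phi> \<cdot> ((g \<cdot> p1) +++ ((e \<cdot> g) \<cdot> p2)) = ((\<phi> \<cdot> g) \<cdot> p1) +++ ((dL \<cdot> (\<phi> \<cdot> g)) \<cdot> p2)"
proof -
  have eg: "e \<cdot> g \<in> Hom C W N" using comp_in[OF W N N g e] .
  have a1: "g \<cdot> p1 \<in> Hom C S N" using comp_in[OF S W N p1 g] .
  have a2: "(e \<cdot> g) \<cdot> p2 \<in> Hom C S N" using comp_in[OF S W N p2 eg] .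
  have "\<phi> \<cdot> ((g \<cdot> p1) +++ ((e \<cdot> g) \<cdot> p2)) = (\<phi> \<cdot> (g \<cdot> p1)) +++ (\<phi> \<cdot> ((e \<cdot> g) \<cdot> p2))"
    using comp_add_r[OF S N L a1 a2 \<phi>] .
  also have "\<phi> \<cdot> (g \<cdot> p1) = (\<phi> \<cdot> g) \<cdot> p1" using assoc[OF S W N L p1 g \<phi>] .
  also have "\<phi> \<cdot> ((e \<cdot> g) \<cdot> p2) = (\<phi> \<cdot> (e \<cdot> g)) \<cdot> p2" using assoc[OF S W N L p2 eg \<phi>] .
  also have "\<phi> \<cdot> (e \<cdot> g) = dL \<cdot> (\<phi> \<cdot> g)" using assoc[OF W N N L g e \<phi>] assoc[OF W N L L g \<phi> dL] ch by simp
  finally show ?thesis .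
qed

lemma fr_zer: assumes N: "N \<in> Ob C" and e: "e \<in> Hom C N N"
  shows "(zer C W N \<cdot> p1) +++ ((e \<cdot> zer C W N) \<cdot> p2) = zer C S N"
  using zer_comp[OF S W N p1] comp_zer[OF W N N e] zer_comp[OF S W N p2] add_zer[OF S N zer_in[OF S N]] by simp

lemma cf_hom: assumes M: "M \<in> Ob C" and d: "d \<in> Hom C M M" and g: "g \<in> Hom C M W"
  shows "(i1 \<cdot> (g \<cdot> d)) +++ (i2 \<cdot> g) \<in> Hom C M S"
  using add_in[OF M S comp_in[OF M W S comp_in[OF M M W d g] i1] comp_in[OF M W S g i2]] .

lemma cf_chain: assumes M: "M \<in> Ob C" and d: "d \<in> Hom C M M" and dd: "d \<cdot> d = zer C M M" and g: "g \<in> Hom C M W"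
  shows "(i2 \<cdot> p1) \<cdot> ((i1 \<cdot> (g \<cdot> d)) +++ (i2 \<cdot> g)) = ((i1 \<cdot> (g \<cdot> d)) +++ (i2 \<cdot> g)) \<cdot> d"
proof -
  have gd: "g \<cdot> d \<in> Hom C M W" using comp_in[OF M M W d g] .
  have a1: "i1 \<cdot> (g \<cdot> d) \<in> Hom C M S" using comp_in[OF M W S gd i1] .
  have a2: "i2 \<cdot> g \<in> Hom C M S" using comp_in[OF M W S g i2] .
  have ip: "i2 \<cdot> p1 \<in> Hom C S S" using comp_in[OF S W S p1 i2] .
  have "(i2 \<cdot> p1) \<cdot> ((i1 \<cdot> (g \<cdot> d)) +++ (i2 \<cdot> g)) = i2 \<cdot> (p1 \<cdot> ((i1 \<cdot> (g \<cdot> d)) +++ (i2 \<cdot> g)))"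
    using assoc[OF M S W S add_in[OF M S a1 a2] p1 i2] by simp
  also have "p1 \<cdot> ((i1 \<cdot> (g \<cdot> d)) +++ (i2 \<cdot> g)) = (p1 \<cdot> (i1 \<cdot> (g \<cdot> d))) +++ (p1 \<cdot> (i2 \<cdot> g))"
    using comp_add_r[OF M S W a1 a2 p1] .
  also have "p1 \<cdot> (i1 \<cdot> (g \<cdot> d)) = g \<cdot> d" using assoc[OF M W S W gd i1 p1] e11 id_l[OF M W gd] by simp
  also have "p1 \<cdot> (i2 \<cdot> g) = zer C M W" using assoc[OF M W S W g i2 p1] e12 zer_comp[OF M W W g] by simp
  also have "(g \<cdot> d) +++ zer C M W = g \<cdot> d" using add_zer[OF M W gd] .
  finally have L: "(i2 \<cdot> p1) \<cdot> ((i1 \<cdot> (g \<cdot> d)) +++ (i2 \<cdot> g)) = i2 \<cdot> (g \<cdot> d)" .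
  have "((i1 \<cdot> (g \<cdot> d)) +++ (i2 \<cdot> g)) \<cdot> d = ((i1 \<cdot> (g \<cdot> d)) \<cdot> d) +++ ((i2 \<cdot> g) \<cdot> d)"
    using comp_add_l[OF M M S d a1 a2] .
  also have "(i1 \<cdot> (g \<cdot> d)) \<cdot> d = zer C M S"
    using assoc[OF M M W S d gd i1] assoc[OF M M M W d d g] dd comp_zer[OF M M W g] comp_zer[OF M W S i1] by simp
  also have "(i2 \<cdot> g) \<cdot> d = i2 \<cdot> (g \<cdot> d)" using assoc[OF M M W S d g i2] by simp
  also have "zer C M S +++ (i2 \<cdot> (g \<cdot> d)) = i2 \<cdot> (g \<cdot> d)" using zer_add[OF M S comp_in[OF M W S gd i2]] .
  finally show ?thesis using L by simp
qed

lemma cf_ext: assumes M: "M \<in> Ob C" and d: "d \<in> Hom C M M" and g: "g \<in> Hom C M W"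
  shows "p2 \<cdot> ((i1 \<cdot> (g \<cdot> d)) +++ (i2 \<cdot> g)) = g"
proof -
  have gd: "g \<cdot> d \<in> Hom C M W" using comp_in[OF M M W d g] .
  have a1: "i1 \<cdot> (g \<cdot> d) \<in> Hom C M S" using comp_in[OF M W S gd i1] .
  have a2: "i2 \<cdot> g \<in> Hom C M S" using comp_in[OF M W S g i2] .
  have "p2 \<cdot> ((i1 \<cdot> (g \<cdot> d)) +++ (i2 \<cdot> g)) = (p2 \<cdot> (i1 \<cdot> (g \<cdot> d))) +++ (p2 \<cdot> (i2 \<cdot> g))"
    using comp_add_r[OF M S W a1 a2 p2] .
  also have "p2 \<cdot> (i1 \<cdot> (g \<cdot> d)) = zer C M W" using assoc[OF M W S W gd i1 p2] e21 zer_comp[OF M W W gd] by simp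
  also have "p2 \<cdot> (i2 \<cdot> g) = g" using assoc[OF M W S W g i2 p2] e22 id_l[OF M W g] by simp
  finally show ?thesis using zer_add[OF M W g] by simp
qed

lemma cf_nat: assumes M: "M \<in> Ob C" and L: "L \<in> Ob C" and d: "d \<in> Hom C M M" and dL: "dL \<in> Hom C L L"
    and g: "g \<in> Hom C M W" and \<phi>: "\<phi> \<in> Hom C L M" and ch: "d \<cdot> \<phi> = \<phi> \<cdot> dL"
  shows "((i1 \<cdot> (g \<cdot> d)) +++ (i2 \<cdot> g)) \<cdot> \<phi> = (i1 \<cdot> ((g \<cdot> \<phi>) \<cdot> dL)) +++ (i2 \<cdot> (g \<cdot> \<phi>))"
proof -
  have gd: "g \<cdot> d \<in> Hom C M W" using comp_in[OF M M W d g] .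
  have a1: "i1 \<cdot> (g \<cdot> d) \<in> Hom C M S" using comp_in[OF M W S gd i1] .
  have a2: "i2 \<cdot> g \<in> Hom C M S" using comp_in[OF M W S g i2] .
  have "((i1 \<cdot> (g \<cdot> d)) +++ (i2 \<cdot> g)) \<cdot> \<phi> = ((i1 \<cdot> (g \<cdot> d)) \<cdot> \<phi>) +++ ((i2 \<cdot> g) \<cdot> \<phi>)"
    using comp_add_l[OF L M S \<phi> a1 a2] .
  also have "(i1 \<cdot> (g \<cdot> d)) \<cdot> \<phi> = i1 \<cdot> ((g \<cdot> d) \<cdot> \<phi>)" using assoc[OF L M W S \<phi> gd i1] by simp
  also have "(g \<cdot> d) \<cdot> \<phi> = (g \<cdot> \<phi>) \<cdot> dL"
    using assoc[OF L M M W \<phi> d g] assoc[OF L L M W dL \<phi> g] ch by simp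
  also have "(i2 \<cdot> g) \<cdot> \<phi> = i2 \<cdot> (g \<cdot> \<phi>)" using assoc[OF L M W S \<phi> g i2] by simp
  finally show ?thesis .
qed

end
end

context cyc begin

definition "freeM N e W j g = (\<lambda>k. if k < m then (if m = 1 then (g \<cdot> bp1 W) +++ ((e j \<cdot> g) \<cdot> bp2 W)
   else if k = j then g else if k = Suc j mod m then e j \<cdot> g else zer C W (N k)) else undefined)"
definition "freeE W j V = (if m = 1 then V j \<cdot> bi1 W else V j)"

lemma bpl: assumes W: "W \<in> Ob C"
  shows "bS W \<in> Ob C" "bi1 W \<in> Hom C W (bS W)" "bi2 W \<in> Hom C W (bS W)" "bp1 W \<in> Hom C (bS W) W"
    "bp2 W \<in> Hom C (bS W) W" "bp1 W \<cdot> bi1 W = idt C W" "bp2 W \<cdot> bi2 W = idt C W"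
    "bp1 W \<cdot> bi2 W = zer C W W" "bp2 W \<cdot> bi1 W = zer C W W"
  using bp_props[OF W] by auto

lemma m1_facts: assumes "m = 1" "j < m" shows "j = 0" "Suc j mod m = 0" using assms by auto

lemma FM_hom: assumes X: "(N,e) \<in> Ob CC" and W: "W \<in> Ob C" and j: "j < m" and g: "g \<in> Hom C W (N j)"
  shows "freeM N e W j g \<in> Hom CC (freeO W j) (N,e)"
proof -
  have A: "\<forall>k<m. freeM N e W j g k \<in> Hom C (if k < m then if m = 1 then bS W else W else undefined) (N k) \<and>
         e k \<cdot> freeM N e W j g k =
         freeM N e W j g (Suc k mod m) \<cdot>
         (if k < m then if m = 1 then bi2 W \<cdot> bp1 W else if k = j then idt C W else zer C W W else undefined)"
  proof (intro allI impI)
  fix k assume k: "k < m"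
  show "freeM N e W j g k \<in> Hom C (if k < m then if m = 1 then bS W else W else undefined) (N k) \<and>
         e k \<cdot> freeM N e W j g k =
         freeM N e W j g (Suc k mod m) \<cdot>
         (if k < m then if m = 1 then bi2 W \<cdot> bp1 W else if k = j then idt C W else zer C W W else undefined)"
  proof (cases "m = 1")
    case True
    have kj: "k = 0" "j = 0" "Suc 0 mod m = 0" using True k j by auto
    have N: "N 0 \<in> Ob C" and e: "e 0 \<in> Hom C (N 0) (N 0)" and ee: "e 0 \<cdot> e 0 = zer C (N 0) (N 0)"
      using ObD[OF X, of 0] True by auto
    show ?thesis unfolding freeM_def using kj True
      fr_hom[OF W bpl[OF W] N e] fr_chain[OF W bpl[OF W] N e ee] g by simp
  next
    case nm1: False
    define n where "n = Suc j mod m"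
    have nj: "n \<noteq> j" unfolding n_def using sm_ne[OF nm1] .
    have n: "n < m" unfolding n_def by simp
    have Nj: "N j \<in> Ob C" and ej: "e j \<in> Hom C (N j) (N n)" and eej: "e n \<cdot> e j = zer C (N j) (N (Suc n mod m))"
      using ObD[OF X j] unfolding n_def by auto
    have Nk: "N k \<in> Ob C" "N (Suc k mod m) \<in> Ob C" and ek: "e k \<in> Hom C (N k) (N (Suc k mod m))"
      using ObD[OF X k] ObD[OF X sm_less[of k]] by auto
    have Nn: "N n \<in> Ob C" "N (Suc n mod m) \<in> Ob C" using ObD[OF X n] ObD[OF X sm_less[of n]] by auto
    have en: "e n \<in> Hom C (N n) (N (Suc n mod m))" using ObD[OF X n] by auto
    have Gin: "\<And>k'. k' < m \<Longrightarrow> freeM N e W j g k' \<in> Hom C W (N k')"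
      unfolding freeM_def using nm1 g comp_in[OF W Nj Nn(1) g ej] zer_in[OF W] ObD[OF X] n_def by auto
    have hom: "freeM N e W j g k \<in> Hom C W (N k)" using Gin[OF k] .
    have "e k \<cdot> freeM N e W j g k = freeM N e W j g (Suc k mod m) \<cdot>
         (if k = j then idt C W else zer C W W)"
    proof (cases "k = j")
      case True
      thus ?thesis unfolding freeM_def using nm1 k j nj n_def id_r[OF W Nn(1) comp_in[OF W Nj Nn(1) g ej]] by auto
    next
      case kj: False
      have R: "freeM N e W j g (Suc k mod m) \<cdot> zer C W W = zer C W (N (Suc k mod m))"
        using comp_zer[OF W W Nk(2) Gin[OF sm_less[of k]]] .
      show ?thesis
      proof (cases "k = n")
        case True
        have "e k \<cdot> freeM N e W j g k = e n \<cdot> (e j \<cdot> g)" unfolding freeM_def using True nm1 k kj n_def by simp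
        also have "\<dots> = zer C W (N (Suc n mod m))"
          using assoc[OF W Nj Nn(1) Nn(2) g ej en] eej zer_comp[OF W Nj Nn(2) g] by simp
        finally show ?thesis using R kj True by simp
      next
        case False
        have "e k \<cdot> freeM N e W j g k = e k \<cdot> zer C W (N k)" unfolding freeM_def using False nm1 kj k n_def by simp
        also have "\<dots> = zer C W (N (Suc k mod m))" using comp_zer[OF W Nk ek] .
        finally show ?thesis using R kj by simp
      qed
    qed
    thus ?thesis using hom nm1 k by simp
  qed
  qed
  have B: "\<forall>k\<ge>m. freeM N e W j g k = undefined" unfolding freeM_def by simp
  show ?thesis unfolding freeO_def cyc_Hom using A B by blast
qed

lemma FM_nat: assumes X: "(N,e) \<in> Ob CC" and Y: "(L,dL) \<in> Ob CC" and W: "W \<in> Ob C" and j: "j < m"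
    and g: "g \<in> Hom C W (N j)" and \<phi>: "\<phi> \<in> Hom CC (N,e) (L,dL)"
  shows "cmp CC \<phi> (freeM N e W j g) = freeM L dL W j (\<phi> j \<cdot> g)"
proof -
  { fix k assume k: "k < m"
    have "\<phi> k \<cdot> freeM N e W j g k = freeM L dL W j (\<phi> j \<cdot> g) k"
    proof (cases "m = 1")
      case True
      have kj: "k = 0" "j = 0" "Suc 0 mod m = 0" using True k j by auto
      have N: "N 0 \<in> Ob C" and e: "e 0 \<in> Hom C (N 0) (N 0)" using ObD[OF X, of 0] True by auto
      have L: "L 0 \<in> Ob C" and dL: "dL 0 \<in> Hom C (L 0) (L 0)" using ObD[OF Y, of 0] True by auto
      have ph: "\<phi> 0 \<in> Hom C (N 0) (L 0)" and ch: "dL 0 \<cdot> \<phi> 0 = \<phi> 0 \<cdot> e 0"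
        using HomD[OF \<phi>, of 0] True by auto
      show ?thesis unfolding freeM_def using kj True fr_nat[OF W bpl[OF W] N L e dL _ ph ch] g by simp
    next
      case nm1: False
      define n where "n = Suc j mod m"
      have nj: "n \<noteq> j" unfolding n_def using sm_ne[OF nm1] .
      have n: "n < m" unfolding n_def by simp
      have O: "N j \<in> Ob C" "N n \<in> Ob C" "L j \<in> Ob C" "L n \<in> Ob C" "N k \<in> Ob C" "L k \<in> Ob C"
        using ObD[OF X j] ObD[OF X n] ObD[OF Y j] ObD[OF Y n] ObD[OF X k] ObD[OF Y k] by auto
      have H: "e j \<in> Hom C (N j) (N n)" "dL j \<in> Hom C (L j) (L n)" "\<phi> j \<in> Hom C (N j) (L j)"
         "\<phi> n \<in> Hom C (N n) (L n)" "\<phi> k \<in> Hom C (N k) (L k)"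
        using ObD[OF X j] ObD[OF Y j] HomD[OF \<phi> j] HomD[OF \<phi> n] HomD[OF \<phi> k] unfolding n_def by auto
      have ch: "dL j \<cdot> \<phi> j = \<phi> n \<cdot> e j" using HomD[OF \<phi> j] unfolding n_def by auto
      show ?thesis
      proof (cases "k = j")
        case True thus ?thesis unfolding freeM_def using nm1 k by simp
      next
        case kj: False
        show ?thesis
        proof (cases "k = n")
          case True
          have "\<phi> n \<cdot> (e j \<cdot> g) = dL j \<cdot> (\<phi> j \<cdot> g)"
            using assoc[OF W O(1,2,4) g H(1,4)] assoc[OF W O(1,3,4) g H(3,2)] ch by simp
          thus ?thesis unfolding freeM_def using nm1 k kj True n_def by simp
        next
          case False
          thus ?thesis unfolding freeM_def using nm1 k kj n_def comp_zer[OF W O(5,6) H(5)] by simp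
        qed
      qed
    qed }
  thus ?thesis unfolding cyc_cmp by (auto simp: fun_eq_iff freeM_def)
qed

lemma FM_zer: assumes X: "(N,e) \<in> Ob CC" and W: "W \<in> Ob C" and j: "j < m"
  shows "freeM N e W j (zer C W (N j)) = zer CC (freeO W j) (N,e)"
proof -
  { fix k assume k: "k < m"
    have "freeM N e W j (zer C W (N j)) k = zer C (fst (freeO W j) k) (N k)"
    proof (cases "m = 1")
      case True
      have kj: "k = 0" "j = 0" "Suc 0 mod m = 0" using True k j by auto
      have N: "N 0 \<in> Ob C" and e: "e 0 \<in> Hom C (N 0) (N 0)" using ObD[OF X, of 0] True by auto
      show ?thesis unfolding freeM_def freeO_def using kj True fr_zer[OF W bpl[OF W] N e] by simp
    next
      case nm1: False
      define n where "n = Suc j mod m"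
      have n: "n < m" unfolding n_def by simp
      have O: "N j \<in> Ob C" "N n \<in> Ob C" and H: "e j \<in> Hom C (N j) (N n)"
        using ObD[OF X j] ObD[OF X n] unfolding n_def by auto
      have Z: "e j \<cdot> zer C W (N j) = zer C W (N (Suc j mod m))" using comp_zer[OF W O H] unfolding n_def .
      show ?thesis unfolding freeM_def freeO_def using nm1 k Z by auto
    qed }
  note A = this
  have E: "freeO W j = (fst (freeO W j), snd (freeO W j))" by simp
  show ?thesis
  proof (subst E, unfold cyc_zer, rule ext)
    fix k show "freeM N e W j (zer C W (N j)) k = (if k < m then zer C (fst (freeO W j) k) (N k) else undefined)"
      using A by (cases "k < m") (auto simp: freeM_def)
  qed
qed

lemma FE_FM: assumes X: "(N,e) \<in> Ob CC" and W: "W \<in> Ob C" and j: "j < m" and g: "g \<in> Hom C W (N j)"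
  shows "freeE W j (freeM N e W j g) = g"
proof (cases "m = 1")
  case True
  have kj: "j = 0" "Suc 0 mod m = 0" using True j by auto
  have N: "N 0 \<in> Ob C" and e: "e 0 \<in> Hom C (N 0) (N 0)" using ObD[OF X, of 0] True by auto
  show ?thesis unfolding freeM_def freeE_def using kj True fr_ext[OF W bpl[OF W] N e] g by simp
next
  case False thus ?thesis unfolding freeM_def freeE_def using j by simp
qed

lemma FE_comp: assumes X: "(N,e) \<in> Ob CC" and Y: "(L,dL) \<in> Ob CC" and W: "W \<in> Ob C" and j: "j < m"
    and V: "V \<in> Hom CC (freeO W j) (N,e)" and \<phi>: "\<phi> \<in> Hom CC (N,e) (L,dL)"
  shows "freeE W j (cmp CC \<phi> V) = \<phi> j \<cdot> freeE W j V" "freeE W j V \<in> Hom C W (N j)"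
proof -
  have Vj: "V j \<in> Hom C (fst (freeO W j) j) (N j)" using HomD[of V "fst (freeO W j)" "snd (freeO W j)", OF _ j] V by simp
  have O: "N j \<in> Ob C" "L j \<in> Ob C" using ObD[OF X j] ObD[OF Y j] by auto
  have ph: "\<phi> j \<in> Hom C (N j) (L j)" using HomD[OF \<phi> j] by auto
  show "freeE W j (cmp CC \<phi> V) = \<phi> j \<cdot> freeE W j V"
  proof (cases "m = 1")
    case True
    have S: "bS W \<in> Ob C" using bpl[OF W] by simp
    have "V j \<in> Hom C (bS W) (N j)" using Vj True j unfolding freeO_def by simp
    thus ?thesis unfolding freeE_def cyc_cmp using True j assoc[OF W S O bpl(2)[OF W] _ ph] by simp
  next
    case False thus ?thesis unfolding freeE_def cyc_cmp using j by simp
  qed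
  show "freeE W j V \<in> Hom C W (N j)"
  proof (cases "m = 1")
    case True
    have S: "bS W \<in> Ob C" using bpl[OF W] by simp
    have "V j \<in> Hom C (bS W) (N j)" using Vj True j unfolding freeO_def by simp
    thus ?thesis unfolding freeE_def using True comp_in[OF W S O(1) bpl(2)[OF W]] by simp
  next
    case False thus ?thesis unfolding freeE_def using Vj j unfolding freeO_def by simp
  qed
qed

definition "cofM M d W j g = (\<lambda>k. if k < m then (if m = 1 then (bi1 W \<cdot> (g \<cdot> d j)) +++ (bi2 W \<cdot> g)
   else if k = j then g else if Suc k mod m = j then g \<cdot> d k else zer C (M k) W) else undefined)"
definition "cofE W j \<Phi> = (if m = 1 then bp2 W \<cdot> \<Phi> j else \<Phi> j)"

lemma CM_hom: assumes X: "(M,d) \<in> Ob CC" and W: "W \<in> Ob C" and j: "j < m" and g: "g \<in> Hom C (M j) W"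
  shows "cofM M d W j g \<in> Hom CC (M,d) (cofO W j)"
proof -
  have A: "\<forall>k<m. cofM M d W j g k \<in> Hom C (M k) (fst (cofO W j) k) \<and>
     snd (cofO W j) k \<cdot> cofM M d W j g k = cofM M d W j g (Suc k mod m) \<cdot> d k"
  proof (intro allI impI)
    fix k assume k: "k < m"
    show "cofM M d W j g k \<in> Hom C (M k) (fst (cofO W j) k) \<and>
     snd (cofO W j) k \<cdot> cofM M d W j g k = cofM M d W j g (Suc k mod m) \<cdot> d k"
    proof (cases "m = 1")
      case True
      have kj: "k = 0" "j = 0" "Suc 0 mod m = 0" using True k j by auto
      have M: "M 0 \<in> Ob C" and d: "d 0 \<in> Hom C (M 0) (M 0)" and dd: "d 0 \<cdot> d 0 = zer C (M 0) (M 0)"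
        using ObD[OF X, of 0] True by auto
      show ?thesis unfolding cofM_def cofO_def using kj True
        cf_hom[OF W bpl[OF W] M d] cf_chain[OF W bpl[OF W] M d dd] g by simp
    next
      case nm1: False
      have Mj: "M j \<in> Ob C" using ObD[OF X j] by auto
      have Pin: "\<And>k'. k' < m \<Longrightarrow> cofM M d W j g k' \<in> Hom C (M k') W"
      proof -
        fix k' assume k': "k' < m"
        have Mk': "M k' \<in> Ob C" and dk': "d k' \<in> Hom C (M k') (M (Suc k' mod m))" using ObD[OF X k'] by auto
        show "cofM M d W j g k' \<in> Hom C (M k') W"
          unfolding cofM_def using nm1 k' g zer_in[OF Mk' W] comp_in[OF Mk' Mj W _ g] dk' by auto
      qed
      have Z: "\<And>k. k < m \<Longrightarrow> Suc k mod m \<noteq> j \<Longrightarrow> cofM M d W j g (Suc k mod m) \<cdot> d k = zer C (M k) W"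
      proof -
        fix k assume k: "k < m" and sj: "Suc k mod m \<noteq> j"
        define s where "s = Suc k mod m"
        have s: "s < m" unfolding s_def by simp
        have O: "M k \<in> Ob C" "M s \<in> Ob C" "M (Suc s mod m) \<in> Ob C" using ObD[OF X k] ObD[OF X s] ObD[OF X sm_less[of s]] by auto
        have H: "d k \<in> Hom C (M k) (M s)" "d s \<in> Hom C (M s) (M (Suc s mod m))"
          and dd: "d s \<cdot> d k = zer C (M k) (M (Suc s mod m))"
          using ObD[OF X k] ObD[OF X s] unfolding s_def by auto
        show "cofM M d W j g (Suc k mod m) \<cdot> d k = zer C (M k) W"
        proof (cases "Suc s mod m = j")
          case True
          have "cofM M d W j g s = g \<cdot> d s" unfolding cofM_def using True nm1 sj s s_def by simp
          moreover have "(g \<cdot> d s) \<cdot> d k = zer C (M k) W"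
            using assoc[OF O(1,2,3) W H g[folded True]] dd comp_zer[OF O(1,3) W g[folded True]] by simp
          ultimately show ?thesis unfolding s_def by simp
        next
          case False
          have "cofM M d W j g s = zer C (M s) W" unfolding cofM_def using False nm1 sj s s_def by simp
          thus ?thesis using zer_comp[OF O(1,2) W H(1)] unfolding s_def by simp
        qed
      qed
      have Mk: "M k \<in> Ob C" and dk: "d k \<in> Hom C (M k) (M (Suc k mod m))" using ObD[OF X k] by auto
      have WW: "idt C W \<in> Hom C W W" "zer C W W \<in> Hom C W W" using id_in[OF W] zer_in[OF W W] by auto
      have "snd (cofO W j) k \<cdot> cofM M d W j g k = cofM M d W j g (Suc k mod m) \<cdot> d k"
      proof (cases "k = j")
        case True
        have "Suc j mod m \<noteq> j" using sm_ne[OF nm1] .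
        thus ?thesis unfolding cofO_def using True nm1 k Z[OF k] zer_comp[OF Mj W W g]
          by (simp add: cofM_def)
      next
        case kj: False
        show ?thesis
        proof (cases "Suc k mod m = j")
          case True
          have "g \<cdot> d k \<in> Hom C (M k) W" using comp_in[OF Mk Mj W _ g] dk True by simp
          thus ?thesis unfolding cofO_def using True nm1 k kj j id_l[OF Mk W] by (simp add: cofM_def)
        next
          case False
          thus ?thesis unfolding cofO_def using False nm1 k kj Z[OF k False] zer_comp[OF Mk W W zer_in[OF Mk W]]
            by (simp add: cofM_def)
        qed
      qed
      thus ?thesis using Pin[OF k] nm1 k unfolding cofO_def by simp
    qed
  qed
  have B: "\<forall>k\<ge>m. cofM M d W j g k = undefined" unfolding cofM_def by simp
  have E: "cofO W j = (fst (cofO W j), snd (cofO W j))" by simp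
  show ?thesis by (subst E, unfold cyc_Hom) (use A B in blast)
qed

lemma CM_nat: assumes X: "(M,d) \<in> Ob CC" and Y: "(L,dL) \<in> Ob CC" and W: "W \<in> Ob C" and j: "j < m"
    and g: "g \<in> Hom C (M j) W" and \<phi>: "\<phi> \<in> Hom CC (L,dL) (M,d)"
  shows "cmp CC (cofM M d W j g) \<phi> = cofM L dL W j (g \<cdot> \<phi> j)"
proof -
  { fix k assume k: "k < m"
    have "cofM M d W j g k \<cdot> \<phi> k = cofM L dL W j (g \<cdot> \<phi> j) k"
    proof (cases "m = 1")
      case True
      have kj: "k = 0" "j = 0" "Suc 0 mod m = 0" using True k j by auto
      have M: "M 0 \<in> Ob C" and d: "d 0 \<in> Hom C (M 0) (M 0)" using ObD[OF X, of 0] True by auto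
      have L: "L 0 \<in> Ob C" and dL: "dL 0 \<in> Hom C (L 0) (L 0)" using ObD[OF Y, of 0] True by auto
      have ph: "\<phi> 0 \<in> Hom C (L 0) (M 0)" and ch: "d 0 \<cdot> \<phi> 0 = \<phi> 0 \<cdot> dL 0"
        using HomD[OF \<phi>, of 0] True by auto
      show ?thesis unfolding cofM_def using kj True cf_nat[OF W bpl[OF W] M L d dL _ ph ch] g by simp
    next
      case nm1: False
      have O: "M j \<in> Ob C" "M k \<in> Ob C" "L k \<in> Ob C" using ObD[OF X j] ObD[OF X k] ObD[OF Y k] by auto
      have H: "\<phi> k \<in> Hom C (L k) (M k)" "d k \<in> Hom C (M k) (M (Suc k mod m))"
        "dL k \<in> Hom C (L k) (L (Suc k mod m))" "\<phi> (Suc k mod m) \<in> Hom C (L (Suc k mod m)) (M (Suc k mod m))"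
        using HomD[OF \<phi> k] ObD[OF X k] ObD[OF Y k] HomD[OF \<phi> sm_less[of k]] by auto
      have ch: "d k \<cdot> \<phi> k = \<phi> (Suc k mod m) \<cdot> dL k" using HomD[OF \<phi> k] by auto
      have Ls: "L (Suc k mod m) \<in> Ob C" using ObD[OF Y sm_less[of k]] by auto
      show ?thesis
      proof (cases "k = j")
        case True thus ?thesis unfolding cofM_def using nm1 k by simp
      next
        case kj: False
        show ?thesis
        proof (cases "Suc k mod m = j")
          case True
          have "(g \<cdot> d k) \<cdot> \<phi> k = (g \<cdot> \<phi> j) \<cdot> dL k"
            using assoc[OF O(3,2,1) W H(1) H(2)[unfolded True] g] assoc[OF O(3) Ls[unfolded True] O(1) W H(3)[unfolded True] H(4)[unfolded True] g]
              ch True by simp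
          thus ?thesis unfolding cofM_def using nm1 k kj True by simp
        next
          case False
          thus ?thesis unfolding cofM_def using nm1 k kj zer_comp[OF O(3,2) W H(1)] by simp
        qed
      qed
    qed }
  thus ?thesis unfolding cyc_cmp by (auto simp: fun_eq_iff cofM_def)
qed

lemma CE_CM: assumes X: "(M,d) \<in> Ob CC" and W: "W \<in> Ob C" and j: "j < m" and g: "g \<in> Hom C (M j) W"
  shows "cofE W j (cofM M d W j g) = g"
proof (cases "m = 1")
  case True
  have kj: "j = 0" "Suc 0 mod m = 0" using True j by auto
  have M: "M 0 \<in> Ob C" and d: "d 0 \<in> Hom C (M 0) (M 0)" using ObD[OF X, of 0] True by auto
  show ?thesis unfolding cofM_def cofE_def using kj True cf_ext[OF W bpl[OF W] M d] g by simp
next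
  case False thus ?thesis unfolding cofM_def cofE_def using j by simp
qed

end

context cyc begin

lemma mono_comp: assumes X: "(N,e) \<in> Ob CC" and Y: "(L,dL) \<in> Ob CC" and mono: "is_mono CC (N,e) (L,dL) i"
  and W: "W \<in> Ob C" and j: "j < m" and g: "g \<in> Hom C W (N j)" and h: "h \<in> Hom C W (N j)"
  and eq: "i j \<cdot> g = i j \<cdot> h"
  shows "g = h"
proof -
  have i: "i \<in> Hom CC (N,e) (L,dL)" using mono unfolding is_mono_def by simp
  have "cmp CC i (freeM N e W j g) = cmp CC i (freeM N e W j h)"
    using FM_nat[OF X Y W j g i] FM_nat[OF X Y W j h i] eq by simp
  hence "freeM N e W j g = freeM N e W j h"
    using mono freeO_Ob[OF W] FM_hom[OF X W j g] FM_hom[OF X W j h] unfolding is_mono_def by blast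
  thus ?thesis using FE_FM[OF X W j g] FE_FM[OF X W j h] by metis
qed

lemma epi_comp: assumes X: "(L,dL) \<in> Ob CC" and Y: "(M,d) \<in> Ob CC" and epi: "is_epi CC (L,dL) (M,d) p"
  and j: "j < m"
  shows "is_epi C (L j) (M j) (p j)"
  unfolding is_epi_def
proof (intro conjI ballI impI)
  have p: "p \<in> Hom CC (L,dL) (M,d)" using epi unfolding is_epi_def by simp
  show "p j \<in> Hom C (L j) (M j)" using HomD[OF p j] by simp
  fix W g h assume W: "W \<in> Ob C" and g: "g \<in> Hom C (M j) W" and h: "h \<in> Hom C (M j) W" and eq: "g \<cdot> p j = h \<cdot> p j"
  have "cmp CC (cofM M d W j g) p = cmp CC (cofM M d W j h) p"
    using CM_nat[OF Y X W j g p] CM_nat[OF Y X W j h p] eq by simp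
  hence "cofM M d W j g = cofM M d W j h"
    using epi cofO_Ob[OF W] CM_hom[OF Y W j g] CM_hom[OF Y W j h] unfolding is_epi_def by blast
  thus "g = h" using CE_CM[OF Y W j g] CE_CM[OF Y W j h] by metis
qed

lemma ker_comp: assumes X: "(L,dL) \<in> Ob CC" and Y: "(M,d) \<in> Ob CC" and Z: "(N,e) \<in> Ob CC"
  and ker: "is_kernel CC (L,dL) (M,d) p (N,e) i" and p: "p \<in> Hom CC (L,dL) (M,d)"
  and W: "W \<in> Ob C" and j: "j < m" and u: "u \<in> Hom C W (L j)" and pu: "p j \<cdot> u = zer C W (M j)"
  shows "\<exists>v\<in>Hom C W (N j). i j \<cdot> v = u"
proof -
  have i: "i \<in> Hom CC (N,e) (L,dL)" using ker unfolding is_kernel_def by simp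
  have U: "freeM L dL W j u \<in> Hom CC (freeO W j) (L,dL)" using FM_hom[OF X W j u] .
  have "cmp CC p (freeM L dL W j u) = zer CC (freeO W j) (M,d)"
    using FM_nat[OF X Y W j u p] pu FM_zer[OF Y W j] by simp
  then obtain V where V: "V \<in> Hom CC (freeO W j) (N,e)" and iV: "cmp CC i V = freeM L dL W j u"
    using ker freeO_Ob[OF W] U unfolding is_kernel_def by blast
  have "i j \<cdot> freeE W j V = u"
    using FE_comp(1)[OF Z X W j V i] iV FE_FM[OF X W j u] by simp
  thus ?thesis using FE_comp(2)[OF Z X W j V i] by blast
qed

end

context ab begin
lemma sandwich:
  assumes O: "X0\<in>Ob C" "X1\<in>Ob C" "X2\<in>Ob C" "Y0\<in>Ob C" "Y1\<in>Ob C" "Y2\<in>Ob C"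
    and H: "\<psi>0 \<in> Hom C Y0 X0" "d0 \<in> Hom C X0 X1" "\<theta>1 \<in> Hom C X1 Y1" "\<psi>1 \<in> Hom C Y1 X1" "d1 \<in> Hom C X1 X2" "\<theta>2 \<in> Hom C X2 Y2"
    and e: "\<psi>1 \<cdot> \<theta>1 = idt C X1"
  shows "((\<theta>2 \<cdot> d1) \<cdot> \<psi>1) \<cdot> ((\<theta>1 \<cdot> d0) \<cdot> \<psi>0) = (\<theta>2 \<cdot> (d1 \<cdot> d0)) \<cdot> \<psi>0"
proof -
  have a: "\<theta>2 \<cdot> d1 \<in> Hom C X1 Y2" using comp_in[OF O(2,3,6) H(5,6)] .
  have b: "\<theta>1 \<cdot> d0 \<in> Hom C X0 Y1" using comp_in[OF O(1,2,5) H(2,3)] .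
  have "((\<theta>2 \<cdot> d1) \<cdot> \<psi>1) \<cdot> ((\<theta>1 \<cdot> d0) \<cdot> \<psi>0) = (((\<theta>2 \<cdot> d1) \<cdot> \<psi>1) \<cdot> (\<theta>1 \<cdot> d0)) \<cdot> \<psi>0"
    using assoc[OF O(4,1,5,6) H(1) b comp_in[OF O(5,2,6) H(4) a]] .
  also have "((\<theta>2 \<cdot> d1) \<cdot> \<psi>1) \<cdot> (\<theta>1 \<cdot> d0) = (\<theta>2 \<cdot> d1) \<cdot> (\<psi>1 \<cdot> (\<theta>1 \<cdot> d0))"
    using assoc[OF O(1,5,2,6) b H(4) a] by simp
  also have "\<psi>1 \<cdot> (\<theta>1 \<cdot> d0) = d0" using assoc[OF O(1,2,5,2) H(2,3,4)] e id_l[OF O(1,2) H(2)] by simp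
  also have "(\<theta>2 \<cdot> d1) \<cdot> d0 = \<theta>2 \<cdot> (d1 \<cdot> d0)" using assoc[OF O(1,2,3,6) H(2,5,6)] by simp
  finally show ?thesis .
qed
end

context cyc begin

lemma transport:
  assumes X: "(L,dL) \<in> Ob CC" and B: "\<forall>j<m. B j \<in> Ob C" "\<forall>j\<ge>m. B j = undefined"
    and th: "\<forall>j<m. \<theta> j \<in> Hom C (L j) (B j) \<and> \<psi> j \<in> Hom C (B j) (L j) \<and> \<psi> j \<cdot> \<theta> j = idt C (L j) \<and> \<theta> j \<cdot> \<psi> j = idt C (B j)"
  defines "d' \<equiv> \<lambda>j. if j < m then (\<theta> (Suc j mod m) \<cdot> dL j) \<cdot> \<psi> j else undefined"
  shows "(B,d') \<in> Ob CC \<and> isomorphic CC (L,dL) (B,d')"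
proof -
  have O: "\<And>j. j < m \<Longrightarrow> L j \<in> Ob C \<and> B j \<in> Ob C" using ObD[OF X] B by auto
  have dH: "\<And>j. j < m \<Longrightarrow> dL j \<in> Hom C (L j) (L (Suc j mod m))" using ObD[OF X] by auto
  have dd: "\<And>j. j < m \<Longrightarrow> dL (Suc j mod m) \<cdot> dL j = zer C (L j) (L (Suc (Suc j mod m) mod m))" using ObD[OF X] by auto
  have d'H: "\<And>j. j < m \<Longrightarrow> d' j \<in> Hom C (B j) (B (Suc j mod m))"
  proof -
    fix j assume j: "j < m"
    have s: "Suc j mod m < m" by simp
    show "d' j \<in> Hom C (B j) (B (Suc j mod m))" unfolding d'_def using j
      comp_in[OF conjunct2[OF O[OF j]] conjunct1[OF O[OF j]] conjunct2[OF O[OF s]] _ comp_in[OF conjunct1[OF O[OF j]] conjunct1[OF O[OF s]] conjunct2[OF O[OF s]] dH[OF j]]]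
      th j s by simp
  qed
  have ob: "(B,d') \<in> Ob CC" unfolding cyc_Ob
  proof (intro conjI allI impI)
    fix j assume j: "j < m"
    define s where "s = Suc j mod m"
    define t where "t = Suc s mod m"
    have s: "s < m" and t: "t < m" unfolding s_def t_def by simp_all
    show "B j \<in> Ob C" using B j by simp
    show "d' j \<in> Hom C (B j) (B (Suc j mod m))" using d'H[OF j] .
    have "d' s \<cdot> d' j = ((\<theta> t \<cdot> dL s) \<cdot> \<psi> s) \<cdot> ((\<theta> s \<cdot> dL j) \<cdot> \<psi> j)"
      unfolding d'_def using j s s_def t_def by simp
    also have "\<dots> = (\<theta> t \<cdot> (dL s \<cdot> dL j)) \<cdot> \<psi> j"
      apply (rule sandwich[of "L j" "L s" "L t" "B j" "B s" "B t" "\<psi> j" "dL j" "\<theta> s" "\<psi> s" "dL s" "\<theta> t"])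
      using O[OF j] O[OF s] O[OF t] th j s t dH[OF j] dH[OF s] unfolding s_def t_def by auto
    also have "\<dots> = zer C (B j) (B t)"
      using dd[OF j] comp_zer[of "L j" "L t" "B t" "\<theta> t"] zer_comp[of "B j" "L j" "B t" "\<psi> j"] O[OF j] O[OF t] th j t
      unfolding s_def t_def by auto
    finally show "d' (Suc j mod m) \<cdot> d' j = zer C (B j) (B (Suc (Suc j mod m) mod m))" unfolding s_def t_def .
  next
    fix j assume "m \<le> j" thus "B j = undefined" "d' j = undefined" using B unfolding d'_def by auto
  qed
  define \<Theta> where "\<Theta> = (\<lambda>j. if j < m then \<theta> j else undefined)"
  define \<Psi> where "\<Psi> = (\<lambda>j. if j < m then \<psi> j else undefined)"
  have TH: "\<Theta> \<in> Hom CC (L,dL) (B,d')" unfolding cyc_Hom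
  proof (intro conjI allI impI)
    fix j assume j: "j < m"
    define s where "s = Suc j mod m"
    have s: "s < m" unfolding s_def by simp
    show "\<Theta> j \<in> Hom C (L j) (B j)" unfolding \<Theta>_def using th j by simp
    have "d' j \<cdot> \<theta> j = ((\<theta> s \<cdot> dL j) \<cdot> \<psi> j) \<cdot> \<theta> j" unfolding d'_def s_def using j by simp
    also have "\<dots> = (\<theta> s \<cdot> dL j) \<cdot> (\<psi> j \<cdot> \<theta> j)"
      using assoc[of "L j" "B j" "L j" "B s" "\<theta> j" "\<psi> j" "\<theta> s \<cdot> dL j"] O[OF j] O[OF s] th j s
        comp_in[of "L j" "L s" "B s" "dL j" "\<theta> s"] dH[OF j] unfolding s_def by auto
    also have "\<dots> = \<theta> s \<cdot> dL j" using th j O[OF j] O[OF s] id_r comp_in[of "L j" "L s" "B s" "dL j" "\<theta> s"] dH[OF j] s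
      unfolding s_def by auto
    finally show "d' j \<cdot> \<Theta> j = \<Theta> (Suc j mod m) \<cdot> dL j" unfolding \<Theta>_def s_def using j by simp
  qed (simp add: \<Theta>_def)
  have PS: "\<Psi> \<in> Hom CC (B,d') (L,dL)" unfolding cyc_Hom
  proof (intro conjI allI impI)
    fix j assume j: "j < m"
    define s where "s = Suc j mod m"
    have s: "s < m" unfolding s_def by simp
    have Os: "L s \<in> Ob C" "B s \<in> Ob C" "L j \<in> Ob C" "B j \<in> Ob C" using O[OF j] O[OF s] by auto
    have Hs: "\<theta> s \<in> Hom C (L s) (B s)" "\<psi> s \<in> Hom C (B s) (L s)" "\<psi> j \<in> Hom C (B j) (L j)" "dL j \<in> Hom C (L j) (L s)"
      using th j s dH[OF j] unfolding s_def by auto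
    show "\<Psi> j \<in> Hom C (B j) (L j)" unfolding \<Psi>_def using th j by simp
    have "\<psi> s \<cdot> d' j = \<psi> s \<cdot> ((\<theta> s \<cdot> dL j) \<cdot> \<psi> j)" unfolding d'_def s_def using j by simp
    also have "\<dots> = (\<psi> s \<cdot> (\<theta> s \<cdot> dL j)) \<cdot> \<psi> j"
      using assoc[OF Os(4,3,2,1) Hs(3) comp_in[OF Os(3,1,2) Hs(4,1)] Hs(2)] .
    also have "\<psi> s \<cdot> (\<theta> s \<cdot> dL j) = dL j"
      using assoc[OF Os(3,1,2,1) Hs(4,1,2)] th s id_l[OF Os(3,1) Hs(4)] by simp
    finally show "dL j \<cdot> \<Psi> j = \<Psi> (Suc j mod m) \<cdot> d' j" unfolding \<Psi>_def s_def using j by simp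
  qed (simp add: \<Psi>_def)
  have "cmp CC \<Psi> \<Theta> = idt CC (L,dL)" unfolding cyc_cmp cyc_idt \<Theta>_def \<Psi>_def using th by (auto simp: fun_eq_iff)
  moreover have "cmp CC \<Theta> \<Psi> = idt CC (B,d')" unfolding cyc_cmp cyc_idt \<Theta>_def \<Psi>_def using th by (auto simp: fun_eq_iff)
  ultimately have "isomorphic CC (L,dL) (B,d')" unfolding isomorphic_def using X ob TH PS by blast
  thus ?thesis using ob by simp
qed

end

context cyc begin

lemma ses_biprod: assumes MM: "(M,dM) \<in> Ob CC" and NN: "(N,e) \<in> Ob CC" and LL: "(L,dL) \<in> Ob CC"
  and ses: "is_ses CC (N,e) (L,dL) (M,dM) i p" and proj: "\<forall>j<m. is_projective C (M j)" and j: "j < m"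
  shows "is_biproduct C (N j) (M j) (L j)"
proof -
  have mono: "is_mono CC (N,e) (L,dL) i" and epi: "is_epi CC (L,dL) (M,dM) p"
    and ker: "is_kernel CC (L,dL) (M,dM) p (N,e) i" using ses unfolding is_ses_def by auto
  have pH: "p \<in> Hom CC (L,dL) (M,dM)" using epi unfolding is_epi_def by simp
  have iH: "i \<in> Hom CC (N,e) (L,dL)" using mono unfolding is_mono_def by simp
  have O: "N j \<in> Ob C" "L j \<in> Ob C" "M j \<in> Ob C" using ObD[OF NN j] ObD[OF LL j] ObD[OF MM j] by auto
  have epij: "is_epi C (L j) (M j) (p j)" using epi_comp[OF LL MM epi j] .
  obtain s where s: "s \<in> Hom C (M j) (L j)" and ps: "p j \<cdot> s = idt C (M j)"
    using epi_section[OF _ O(2) epij] proj j by blast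
  have "cmp CC p i = zer CC (N,e) (M,dM)" using ker unfolding is_kernel_def by simp
  hence "cmp CC p i j = zer CC (N,e) (M,dM) j" by simp
  hence pi: "p j \<cdot> i j = zer C (N j) (M j)" using j unfolding cyc_cmp cyc_zer by simp
  show ?thesis
  proof (rule split_biprod[OF O(1,2,3) _ _ s ps pi])
    show "i j \<in> Hom C (N j) (L j)" using HomD[OF iH j] by simp
    show "p j \<in> Hom C (L j) (M j)" using HomD[OF pH j] by simp
    show "\<And>W g h. W \<in> Ob C \<Longrightarrow> g \<in> Hom C W (N j) \<Longrightarrow> h \<in> Hom C W (N j) \<Longrightarrow> i j \<cdot> g = i j \<cdot> h \<Longrightarrow> g = h"
      using mono_comp[OF NN LL mono _ j] by blast
    show "\<And>u. u \<in> Hom C (L j) (L j) \<Longrightarrow> p j \<cdot> u = zer C (L j) (M j) \<Longrightarrow> \<exists>v\<in>Hom C (L j) (N j). i j \<cdot> v = u"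
      using ker_comp[OF LL MM NN ker pH O(2) j] by blast
  qed
qed

definition "Bo N M = (\<lambda>j. if j < m then (SOME S. is_biproduct C (N j) (M j) S) else undefined)"

lemma ext_props:
  assumes MP: "in_CmP C m (M,dM)" and NP: "in_CmP C m (N,e)" and ex: "(L',i,p) \<in> exts CC (M,dM) (N,e)"
  shows "in_CmP C m L'" "\<forall>j<m. isomorphic C (fst L' j) (Bo N M j)"
    "d0_nonzero C m (N,e) \<Longrightarrow> d0_nonzero C m L'" "d0_nonzero C m (M,dM) \<Longrightarrow> d0_nonzero C m L'"
proof -
  obtain L dL where L': "L' = (L,dL)" by (cases L')
  have ses: "is_ses CC (N,e) (L,dL) (M,dM) i p" using ex L' unfolding exts_def by simp
  have MM: "(M,dM) \<in> Ob CC" and NN: "(N,e) \<in> Ob CC" and LL: "(L,dL) \<in> Ob CC"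
    using ses unfolding is_ses_def by auto
  have projM: "\<forall>j<m. is_projective C (M j)" and projN: "\<forall>j<m. is_projective C (N j)"
    using MP NP unfolding in_CmP_def by auto
  have bp: "\<And>j. j < m \<Longrightarrow> is_biproduct C (N j) (M j) (L j)" using ses_biprod[OF MM NN LL ses projM] .
  have O: "\<And>j. j < m \<Longrightarrow> N j \<in> Ob C \<and> L j \<in> Ob C \<and> M j \<in> Ob C" using ObD[OF NN] ObD[OF LL] ObD[OF MM] by blast
  have "\<forall>j<m. is_projective C (L j)"
  proof (intro allI impI)
    fix j assume j: "j < m"
    show "is_projective C (L j)"
      by (rule biprod_projective[of "N j" "M j"]) (use O[OF j] bp[OF j] projM projN j in auto)
  qed
  thus "in_CmP C m L'" unfolding in_CmP_def L' using LL by simp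
  show "\<forall>j<m. isomorphic C (fst L' j) (Bo N M j)"
  proof (intro allI impI)
    fix j assume j: "j < m"
    have b2: "is_biproduct C (N j) (M j) (Bo N M j)" unfolding Bo_def using j someI[of "is_biproduct C (N j) (M j)", OF bp[OF j]] by simp
    have Bj: "Bo N M j \<in> Ob C" using b2 unfolding is_biproduct_def by simp
    show "isomorphic C (fst L' j) (Bo N M j)" unfolding isomorphic_def L'
      using biprod_iso[of "N j" "M j" "L j" "Bo N M j"] O[OF j] bp[OF j] b2 Bj by auto
  qed
  have mono: "is_mono CC (N,e) (L,dL) i" and epi: "is_epi CC (L,dL) (M,dM) p" using ses unfolding is_ses_def by auto
  have pH: "p \<in> Hom CC (L,dL) (M,dM)" using epi unfolding is_epi_def by simp
  have iH: "i \<in> Hom CC (N,e) (L,dL)" using mono unfolding is_mono_def by simp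
  have m0: "0 < m" using m1 by simp
  define n where "n = Suc 0 mod m"
  have n: "n < m" unfolding n_def by (rule sm_less)
  have On: "N 0 \<in> Ob C" "L 0 \<in> Ob C" "M 0 \<in> Ob C" "N n \<in> Ob C" "L n \<in> Ob C" "M n \<in> Ob C" using O[OF m0] O[OF n] by auto
  have Hn: "e 0 \<in> Hom C (N 0) (N n)" "dL 0 \<in> Hom C (L 0) (L n)" "dM 0 \<in> Hom C (M 0) (M n)"
    "i 0 \<in> Hom C (N 0) (L 0)" "i n \<in> Hom C (N n) (L n)" "p 0 \<in> Hom C (L 0) (M 0)" "p n \<in> Hom C (L n) (M n)"
    using ObD[OF NN m0] ObD[OF LL m0] ObD[OF MM m0] HomD[OF iH m0] HomD[OF iH n] HomD[OF pH m0] HomD[OF pH n]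
    unfolding n_def by auto
  have chi: "dL 0 \<cdot> i 0 = i n \<cdot> e 0" using HomD[OF iH m0] unfolding n_def by simp
  have chp: "dM 0 \<cdot> p 0 = p n \<cdot> dL 0" using HomD[OF pH m0] unfolding n_def by simp
  show "d0_nonzero C m (N,e) \<Longrightarrow> d0_nonzero C m L'"
  proof (rule ccontr)
    assume D: "d0_nonzero C m (N,e)" and nD: "\<not> d0_nonzero C m L'"
    hence z: "dL 0 = zer C (L 0) (L n)" unfolding d0_nonzero_def L' n_def by simp
    have "i n \<cdot> e 0 = i n \<cdot> zer C (N 0) (N n)"
      using chi z zer_comp[OF On(1,2,5) Hn(4)] comp_zer[OF On(1,4,5) Hn(5)] by simp
    hence "e 0 = zer C (N 0) (N n)" using mono_comp[OF NN LL mono On(1) n Hn(1) zer_in[OF On(1,4)]] by simp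
    thus False using D unfolding d0_nonzero_def n_def by simp
  qed
  show "d0_nonzero C m (M,dM) \<Longrightarrow> d0_nonzero C m L'"
  proof (rule ccontr)
    assume D: "d0_nonzero C m (M,dM)" and nD: "\<not> d0_nonzero C m L'"
    hence z: "dL 0 = zer C (L 0) (L n)" unfolding d0_nonzero_def L' n_def by simp
    have "dM 0 \<cdot> p 0 = zer C (M 0) (M n) \<cdot> p 0"
      using chp z comp_zer[OF On(2,5,6) Hn(7)] zer_comp[OF On(2,3,6) Hn(6)] by simp
    hence "dM 0 = zer C (M 0) (M n)"
      using epi_comp[OF LL MM epi m0] On Hn(3) zer_in[OF On(3,6)] unfolding is_epi_def by blast
    thus False using D unfolding d0_nonzero_def n_def by simp
  qed
qed

lemma fin_classes:
  assumes fin: "\<forall>X\<in>Ob C. \<forall>Y\<in>Ob C. finite (Hom C X Y)"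
    and B: "\<forall>j<m. B j \<in> Ob C" "\<forall>j\<ge>m. B j = undefined"
  shows "finite {isocls CC X | X. X \<in> Ob CC \<and> (\<forall>j<m. isomorphic C (fst X j) (B j))}"
proof (rule finite_subset)
  show "finite ((\<lambda>d'. isocls CC (B,d')) ` (PiE {..<m} (\<lambda>j. Hom C (B j) (B (Suc j mod m)))))"
    using fin B by (intro finite_imageI finite_PiE) auto
  show "{isocls CC X | X. X \<in> Ob CC \<and> (\<forall>j<m. isomorphic C (fst X j) (B j))}
    \<subseteq> (\<lambda>d'. isocls CC (B,d')) ` (PiE {..<m} (\<lambda>j. Hom C (B j) (B (Suc j mod m))))"
  proof
    fix c assume "c \<in> {isocls CC X | X. X \<in> Ob CC \<and> (\<forall>j<m. isomorphic C (fst X j) (B j))}"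
    then obtain L dL where X: "(L,dL) \<in> Ob CC" and iso: "\<forall>j<m. isomorphic C (L j) (B j)"
      and c: "c = isocls CC (L,dL)" by auto
    have "\<forall>j\<in>{..<m}. \<exists>tp. fst tp \<in> Hom C (L j) (B j) \<and> snd tp \<in> Hom C (B j) (L j) \<and>
       snd tp \<cdot> fst tp = idt C (L j) \<and> fst tp \<cdot> snd tp = idt C (B j)"
    proof
      fix j assume "j \<in> {..<m}"
      then obtain f g where "f \<in> Hom C (L j) (B j)" "g \<in> Hom C (B j) (L j)" "g \<cdot> f = idt C (L j)" "f \<cdot> g = idt C (B j)"
        using iso unfolding isomorphic_def by auto
      thus "\<exists>tp. fst tp \<in> Hom C (L j) (B j) \<and> snd tp \<in> Hom C (B j) (L j) \<and>
       snd tp \<cdot> fst tp = idt C (L j) \<and> fst tp \<cdot> snd tp = idt C (B j)" by (intro exI[of _ "(f,g)"]) simp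
    qed
    then obtain tp where tp: "\<forall>j\<in>{..<m}. fst (tp j) \<in> Hom C (L j) (B j) \<and> snd (tp j) \<in> Hom C (B j) (L j) \<and>
       snd (tp j) \<cdot> fst (tp j) = idt C (L j) \<and> fst (tp j) \<cdot> snd (tp j) = idt C (B j)"
      by (rule bchoice[elim_format]) blast
    define \<theta> where "\<theta> = (\<lambda>j. fst (tp j))"
    define \<psi> where "\<psi> = (\<lambda>j. snd (tp j))"
    define d' where "d' = (\<lambda>j. if j < m then (\<theta> (Suc j mod m) \<cdot> dL j) \<cdot> \<psi> j else undefined)"
    have th: "\<forall>j<m. \<theta> j \<in> Hom C (L j) (B j) \<and> \<psi> j \<in> Hom C (B j) (L j) \<and> \<psi> j \<cdot> \<theta> j = idt C (L j) \<and> \<theta> j \<cdot> \<psi> j = idt C (B j)"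
      using tp unfolding \<theta>_def \<psi>_def by auto
    have T: "(B,d') \<in> Ob CC \<and> isomorphic CC (L,dL) (B,d')" unfolding d'_def by (rule transport[OF X B th])
    have "d' \<in> PiE {..<m} (\<lambda>j. Hom C (B j) (B (Suc j mod m)))"
      using T ObD[of B d'] unfolding PiE_iff extensional_def d'_def by auto
    moreover have "c = isocls CC (B,d')" using c isocls_eq T by blast
    ultimately show "c \<in> (\<lambda>d'. isocls CC (B,d')) ` (PiE {..<m} (\<lambda>j. Hom C (B j) (B (Suc j mod m))))" by blast
  qed
qed

end

context cyc begin

lemma nz_term: assumes "hall_mult CC f g c \<noteq> 0"
  shows "c \<in> iso_classes CC (\<lambda>_. True) \<and> (\<exists>a b. f a \<noteq> 0 \<and> g b \<noteq> 0 \<and> Ext1_mid CC (rep a) (rep b) (rep c) \<noteq> {})"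
proof -
  have c: "c \<in> iso_classes CC (\<lambda>_. True)" using assms unfolding hall_mult_def by (auto split: if_splits)
  have "(\<Sum>a\<in>{a. f a \<noteq> 0}. \<Sum>b\<in>{b. g b \<noteq> 0}. f a * g b * hall_coeff CC (rep a) (rep b) (rep c)) \<noteq> 0"
    using assms c unfolding hall_mult_def by simp
  then obtain a where a: "a \<in> {a. f a \<noteq> 0}" and
    "(\<Sum>b\<in>{b. g b \<noteq> 0}. f a * g b * hall_coeff CC (rep a) (rep b) (rep c)) \<noteq> 0"
    using sum.not_neutral_contains_not_neutral by blast
  then obtain b where b: "b \<in> {b. g b \<noteq> 0}" and "f a * g b * hall_coeff CC (rep a) (rep b) (rep c) \<noteq> 0"
    using sum.not_neutral_contains_not_neutral by blast
  hence "hall_coeff CC (rep a) (rep b) (rep c) \<noteq> 0" by auto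
  hence "card (Ext1_mid CC (rep a) (rep b) (rep c)) \<noteq> 0" unfolding hall_coeff_def by auto
  hence "Ext1_mid CC (rep a) (rep b) (rep c) \<noteq> {}" by auto
  thus ?thesis using a b c by blast
qed

lemma Ext1_mid_ne: assumes "Ext1_mid CC X Y Z \<noteq> {}"
  shows "\<exists>L' i p. (L',i,p) \<in> exts CC X Y \<and> isomorphic CC L' Z"
proof -
  obtain cl where cl: "cl \<in> Ext1 CC X Y" and ex: "\<exists>t\<in>cl. isomorphic CC (fst t) Z"
    using assms unfolding Ext1_mid_def by (auto simp: case_prod_beta)
  then obtain t where m: "t \<in> cl" and iso: "isomorphic CC (fst t) Z" by blast
  obtain x where x: "x \<in> exts CC X Y" and clx: "cl = ext_rel CC X Y `` {x}"
    using cl unfolding Ext1_def quotient_def by blast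
  have "(x, t) \<in> ext_rel CC X Y" using m clx by blast
  hence "t \<in> exts CC X Y" unfolding ext_rel_def by (auto simp: case_prod_beta)
  thus ?thesis using iso by (cases t) auto
qed

lemma iso_classes_rep: assumes "a \<in> iso_classes CC P" and PI: "\<And>X Y. isomorphic CC X Y \<Longrightarrow> P X \<Longrightarrow> P Y"
  shows "rep a \<in> Ob CC \<and> P (rep a) \<and> a = isocls CC (rep a)"
proof -
  obtain X where X: "X \<in> Ob CC" "P X" and a: "a = isocls CC X" using assms(1) unfolding iso_classes_def by blast
  have i: "isomorphic CC X (rep a)" using rep_iso[OF X(1)] unfolding a .
  have "rep a \<in> Ob CC" using i unfolding isomorphic_def by blast
  moreover have "P (rep a)" using PI[OF i X(2)] .
  moreover have "a = isocls CC (rep a)" using isocls_eq[OF i] unfolding a[symmetric] .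
  ultimately show ?thesis by blast
qed

lemma mult_in:
  assumes fin: "\<forall>X\<in>Ob C. \<forall>Y\<in>Ob C. finite (Hom C X Y)"
    and f: "f \<in> hall_span CC (in_CmP C m)" and g: "g \<in> hall_span CC (in_CmP C m)"
    and H: "\<And>a b. f a \<noteq> 0 \<Longrightarrow> g b \<noteq> 0 \<Longrightarrow> d0_nonzero C m (rep a) \<or> d0_nonzero C m (rep b)"
  shows "hall_mult CC f g \<in> hall_span CC (\<lambda>X. in_CmP C m X \<and> d0_nonzero C m X)"
proof -
  have fs: "finite {a. f a \<noteq> 0}" "{a. f a \<noteq> 0} \<subseteq> iso_classes CC (in_CmP C m)" using f unfolding hall_span_def by auto
  have gs: "finite {b. g b \<noteq> 0}" "{b. g b \<noteq> 0} \<subseteq> iso_classes CC (in_CmP C m)" using g unfolding hall_span_def by auto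
  define T where "T = (\<lambda>(a::((nat \<Rightarrow> 'o) \<times> (nat \<Rightarrow> 'a)) set) (b::((nat \<Rightarrow> 'o) \<times> (nat \<Rightarrow> 'a)) set). {isocls CC X | X. X \<in> Ob CC \<and> (\<forall>j<m. isomorphic C (fst X j) (Bo (fst (rep b)) (fst (rep a)) j))})"
  have key: "\<And>c. hall_mult CC f g c \<noteq> 0 \<Longrightarrow>
     c \<in> iso_classes CC (\<lambda>X. in_CmP C m X \<and> d0_nonzero C m X) \<and> (\<exists>a b. f a \<noteq> 0 \<and> g b \<noteq> 0 \<and> c \<in> T a b)"
  proof -
    fix c assume "hall_mult CC f g c \<noteq> 0"
    then obtain a b where c: "c \<in> iso_classes CC (\<lambda>_. True)" and fa: "f a \<noteq> 0" and gb: "g b \<noteq> 0"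
      and E: "Ext1_mid CC (rep a) (rep b) (rep c) \<noteq> {}" using nz_term by blast
    obtain L' i p where ex: "(L',i,p) \<in> exts CC (rep a) (rep b)" and iso: "isomorphic CC L' (rep c)"
      using Ext1_mid_ne[OF E] by blast
    have ra: "rep a \<in> Ob CC \<and> in_CmP C m (rep a)" using iso_classes_rep[of a "in_CmP C m"] fs fa iso_CmP by blast
    have rb: "rep b \<in> Ob CC \<and> in_CmP C m (rep b)" using iso_classes_rep[of b "in_CmP C m"] gs gb iso_CmP by blast
    have rc: "rep c \<in> Ob CC \<and> c = isocls CC (rep c)" using iso_classes_rep[of c "\<lambda>_. True"] c by blast
    obtain M dM where A: "rep a = (M,dM)" by (cases "rep a")
    obtain N e where B: "rep b = (N,e)" by (cases "rep b")
    note EP = ext_props[of M dM N e L' i p]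
    have L'P: "in_CmP C m L'" and L'iso: "\<forall>j<m. isomorphic C (fst L' j) (Bo N M j)"
      using EP ra rb ex A B by auto
    have L'd: "d0_nonzero C m L'" using EP ra rb ex A B H[OF fa gb] by auto
    have L'O: "L' \<in> Ob CC" using iso unfolding isomorphic_def by simp
    have cL: "c = isocls CC L'" using rc isocls_eq[OF iso] by simp
    have "c \<in> iso_classes CC (\<lambda>X. in_CmP C m X \<and> d0_nonzero C m X)"
      unfolding iso_classes_def using cL L'O L'P L'd by blast
    moreover have "c \<in> T a b" unfolding T_def using cL L'O L'iso A B
      by (intro CollectI exI[of _ L']) simp
    ultimately show "c \<in> iso_classes CC (\<lambda>X. in_CmP C m X \<and> d0_nonzero C m X) \<and> (\<exists>a b. f a \<noteq> 0 \<and> g b \<noteq> 0 \<and> c \<in> T a b)"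
      using fa gb by blast
  qed
  have finT: "\<And>a b. f a \<noteq> 0 \<Longrightarrow> g b \<noteq> 0 \<Longrightarrow> finite (T a b)"
  proof -
    fix a b assume fa: "f a \<noteq> 0" and gb: "g b \<noteq> 0"
    have ra: "rep a \<in> Ob CC" using iso_classes_rep[of a "in_CmP C m"] fs fa iso_CmP by blast
    have rb: "rep b \<in> Ob CC" using iso_classes_rep[of b "in_CmP C m"] gs gb iso_CmP by blast
    obtain M dM where A: "rep a = (M,dM)" by (cases "rep a")
    obtain N e where B: "rep b = (N,e)" by (cases "rep b")
    have "\<forall>j<m. Bo N M j \<in> Ob C"
    proof (intro allI impI)
      fix j assume j: "j < m"
      have "N j \<in> Ob C" "M j \<in> Ob C" using ObD[of N e j] ObD[of M dM j] ra rb A B j by auto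
      hence "\<exists>S. is_biproduct C (N j) (M j) S" using abel unfolding is_abelian_def by blast
      hence "is_biproduct C (N j) (M j) (SOME S. is_biproduct C (N j) (M j) S)" by (rule someI_ex)
      thus "Bo N M j \<in> Ob C" unfolding Bo_def is_biproduct_def using j by simp
    qed
    moreover have "\<forall>j\<ge>m. Bo N M j = undefined" unfolding Bo_def by simp
    ultimately show "finite (T a b)" unfolding T_def A B using fin_classes[OF fin] by simp
  qed
  have "{c. hall_mult CC f g c \<noteq> 0} \<subseteq> (\<Union>a\<in>{a. f a \<noteq> 0}. \<Union>b\<in>{b. g b \<noteq> 0}. T a b)"
    using key by blast
  moreover have "finite (\<Union>a\<in>{a. f a \<noteq> 0}. \<Union>b\<in>{b. g b \<noteq> 0}. T a b)"
    using fs gs finT by blast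
  ultimately have "finite {c. hall_mult CC f g c \<noteq> 0}" by (rule finite_subset)
  moreover have "{c. hall_mult CC f g c \<noteq> 0} \<subseteq> iso_classes CC (\<lambda>X. in_CmP C m X \<and> d0_nonzero C m X)"
    using key by blast
  ultimately show ?thesis unfolding hall_span_def by blast
qed

end

theorem lemma3p3:
  fixes C :: "('o, 'a, 'k::{finite,field}) kcat" and m :: nat
  assumes "finitary_abelian C"
    and "enough_projectives C"
    and "m \<ge> 1"
  shows "two_sided_ideal (hall_mult (cyc_cat C m))
           (hall_span (cyc_cat C m) (in_CmP C m))
           (hall_span (cyc_cat C m) (\<lambda>X. in_CmP C m X \<and> d0_nonzero C m X))"
proof -
  have ab: "is_abelian C" and fin: "\<forall>X\<in>Ob C. \<forall>Y\<in>Ob C. finite (Hom C X Y)"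
    using assms(1) unfolding finitary_abelian_def by auto
  interpret cyc C m by unfold_locales (use ab assms(3) in auto)
  define R where "R = hall_span (cyc_cat C m) (in_CmP C m)"
  define J where "J = hall_span (cyc_cat C m) (\<lambda>X. in_CmP C m X \<and> d0_nonzero C m X)"
  have JR: "J \<subseteq> R" unfolding J_def R_def hall_span_def iso_classes_def by blast
  have Jd: "\<And>g b. g \<in> J \<Longrightarrow> g b \<noteq> 0 \<Longrightarrow> d0_nonzero C m (rep b)"
  proof -
    fix g b assume g: "g \<in> J" and gb: "g b \<noteq> 0"
    hence "b \<in> iso_classes CC (\<lambda>X. in_CmP C m X \<and> d0_nonzero C m X)" unfolding J_def hall_span_def by auto
    thus "d0_nonzero C m (rep b)" using iso_classes_rep[of b "\<lambda>X. in_CmP C m X \<and> d0_nonzero C m X"]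
      iso_CmP iso_d0 by blast
  qed
  have z: "(\<lambda>_. 0) \<in> J" unfolding J_def hall_span_def by simp
  have add: "\<forall>f\<in>J. \<forall>g\<in>J. (\<lambda>c. f c + g c) \<in> J"
  proof (intro ballI)
    fix f g assume f: "f \<in> J" and g: "g \<in> J"
    have "{c. f c + g c \<noteq> 0} \<subseteq> {c. f c \<noteq> 0} \<union> {c. g c \<noteq> 0}" by auto
    thus "(\<lambda>c. f c + g c) \<in> J" using f g unfolding J_def hall_span_def
      by (auto intro: finite_subset)
  qed
  have sm: "\<forall>a. \<forall>f\<in>J. (\<lambda>c. a * f c) \<in> J"
  proof (intro allI ballI)
    fix a f assume f: "f \<in> J"
    have "{c. a * f c \<noteq> 0} \<subseteq> {c. f c \<noteq> 0}" by auto
    thus "(\<lambda>c. a * f c) \<in> J" using f unfolding J_def hall_span_def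
      by (auto intro: finite_subset)
  qed
  have mul: "\<forall>f\<in>R. \<forall>g\<in>J. hall_mult (cyc_cat C m) f g \<in> J \<and> hall_mult (cyc_cat C m) g f \<in> J"
  proof (intro ballI conjI)
    fix f g assume f: "f \<in> R" and g: "g \<in> J"
    have gR: "g \<in> R" using g JR by blast
    show "hall_mult (cyc_cat C m) f g \<in> J" unfolding J_def
      by (rule mult_in[OF fin]) (use f gR Jd[OF g] in \<open>auto simp: R_def\<close>)
    show "hall_mult (cyc_cat C m) g f \<in> J" unfolding J_def
      by (rule mult_in[OF fin]) (use f gR Jd[OF g] in \<open>auto simp: R_def\<close>)
  qed
  show ?thesis unfolding two_sided_ideal_def R_def[symmetric] J_def[symmetric]
    using JR z add sm mul by blast
qed

end
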